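(* Let $n\ge2$, $0<m\le L$, $\kappa=L/m$, let $\rho\in(0,1)$ satisfy $1/(1-\rho)\ge(\sqrt\kappa+1)/2$, let $c=\dfrac{\kappa-(1+\rho)/(1-\rho)}{\rho\,(\kappa+(1+\rho)/(1-\rho))}$, and consider the two-step momentum algorithm with parameters $\alpha=(1+\rho)(1+c\rho)/L$, $\beta=c\rho^2$, $\gamma=0$. Then $$J_{\max}=n\hat J(m)=n\hat J(L),\qquad J_{\min}=2\hat J(m)+(n-2)\hat J(\hat\lambda),$$ where $\hat\lambda=(m+L)/2$, $\hat J(m)=\dfrac{\sigma_w^2(\kappa+1)}{2(1-c\rho^2)(1+\rho)(1+c\rho)}$ and $\hat J(\hat\lambda)=\dfrac{\sigma_w^2}{(1+c\rho^2)(1-c\rho^2)}$.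
   Context: $\mathcal{Q}_m^L$ is the class of quadratic functions $f(x)=\tfrac12x^TQx-q^Tx$ on $\mathbb{R}^n$ with $q\in\mathbb{R}^n$, $Q=Q^T\succ0$ whose largest eigenvalue is $L$ and smallest is $m$; $x^\star$ is the minimizer. The noisy two-step momentum algorithm is $x^{t+2}=x^{t+1}+\beta(x^{t+1}-x^t)-\alpha\nabla f\big(x^{t+1}+\gamma(x^{t+1}-x^t)\big)+\sigma_w w^t$, with $w^t$ white noise, $\mathbb{E}[w^t]=0$, $\mathbb{E}[w^t(w^\tau)^T]=I\delta(t-\tau)$, $\sigma_w\ge0$. For $\lambda>0$ let $a(\lambda)=\beta-\gamma\alpha\lambda$, $b(\lambda)=(1+\gamma)\alpha\lambda-(1+\beta)$, $d=a+b+1$, $l=a-b+1$, $h=1-a$, and $\hat J(\lambda)=\sigma_w^2(d+l)/(2dhl)$ (evaluated at $\lambda$). Noise amplification $J=\lim_{t\to\infty}\frac1t\sum_{k=0}^t\mathbb{E}\|x^k-x^\star\|_2^2$; $J_{\max}=\max_{f\in\mathcal{Q}_m^L}J$, $J_{\min}=\min_{f\in\mathcal{Q}_m^L}J$. *)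

theory Defs
  imports "HOL-Probability.Probability"
begin

definition mat_eigenvalue :: "real^'n^'n \<Rightarrow> real \<Rightarrow> bool" where
  "mat_eigenvalue Q lam \<longleftrightarrow> (\<exists>v. v \<noteq> 0 \<and> Q *v v = lam *\<^sub>R v)"

text \<open>The class Q_m^L, a quadratic f(x) = 1/2 x^T Q x - q^T x represented by the pair (Q,q).\<close>
definition quad_class :: "real \<Rightarrow> real \<Rightarrow> ((real^'n^'n) \<times> (real^'n)) set" where
  "quad_class m L = {(Q, q). transpose Q = Q
      \<and> (\<forall>x. x \<noteq> 0 \<longrightarrow> x \<bullet> (Q *v x) > 0)
      \<and> mat_eigenvalue Q L \<and> (\<forall>lam. mat_eigenvalue Q lam \<longrightarrow> lam \<le> L)
      \<and> mat_eigenvalue Q m \<and> (\<forall>lam. mat_eigenvalue Q lam \<longrightarrow> m \<le> lam)}"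

definition quad_fun :: "real^'n^'n \<Rightarrow> real^'n \<Rightarrow> real^'n \<Rightarrow> real" where
  "quad_fun Q q x = (1/2) * (x \<bullet> (Q *v x)) - q \<bullet> x"

text \<open>Gradient of quad_fun Q q (Q symmetric).\<close>
definition quad_grad :: "real^'n^'n \<Rightarrow> real^'n \<Rightarrow> real^'n \<Rightarrow> real^'n" where
  "quad_grad Q q x = Q *v x - q"

definition quad_argmin :: "real^'n^'n \<Rightarrow> real^'n \<Rightarrow> real^'n" where
  "quad_argmin Q q = (THE x. \<forall>y. quad_fun Q q x \<le> quad_fun Q q y)"

fun mom_state :: "real \<Rightarrow> real \<Rightarrow> real \<Rightarrow> real \<Rightarrow> real^'n^'n \<Rightarrow> real^'n
    \<Rightarrow> (nat \<Rightarrow> real^'n) \<Rightarrow> real^'n \<Rightarrow> real^'n \<Rightarrow> nat \<Rightarrow> (real^'n) \<times> (real^'n)" where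
  "mom_state \<alpha> \<beta> \<gamma> \<sigma> Q q w x0 x1 0 = (x0, x1)"
| "mom_state \<alpha> \<beta> \<gamma> \<sigma> Q q w x0 x1 (Suc t) =
     (let (a, b) = mom_state \<alpha> \<beta> \<gamma> \<sigma> Q q w x0 x1 t in
      (b, b + \<beta> *\<^sub>R (b - a) - \<alpha> *\<^sub>R quad_grad Q q (b + \<gamma> *\<^sub>R (b - a)) + \<sigma> *\<^sub>R w t))"

definition mom_iter :: "real \<Rightarrow> real \<Rightarrow> real \<Rightarrow> real \<Rightarrow> real^'n^'n \<Rightarrow> real^'n
    \<Rightarrow> (nat \<Rightarrow> real^'n) \<Rightarrow> real^'n \<Rightarrow> real^'n \<Rightarrow> nat \<Rightarrow> real^'n" where
  "mom_iter \<alpha> \<beta> \<gamma> \<sigma> Q q w x0 x1 k = fst (mom_state \<alpha> \<beta> \<gamma> \<sigma> Q q w x0 x1 k)"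

definition white_noise :: "'a measure \<Rightarrow> (nat \<Rightarrow> 'a \<Rightarrow> real^'n) \<Rightarrow> bool" where
  "white_noise M w \<longleftrightarrow> prob_space M \<and>
     (\<forall>t. w t \<in> borel_measurable M) \<and>
     (\<forall>t i. integrable M (\<lambda>\<omega>. w t \<omega> $ i) \<and> (LINT \<omega>|M. w t \<omega> $ i) = 0) \<and>
     (\<forall>t s i j. integrable M (\<lambda>\<omega>. w t \<omega> $ i * w s \<omega> $ j) \<and>
        (LINT \<omega>|M. w t \<omega> $ i * w s \<omega> $ j) = (if t = s \<and> i = j then 1 else 0))"

definition noise_avg :: "'a measure \<Rightarrow> (nat \<Rightarrow> 'a \<Rightarrow> real^'n) \<Rightarrow> real \<Rightarrow> real \<Rightarrow> real \<Rightarrow> real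
    \<Rightarrow> real^'n^'n \<Rightarrow> real^'n \<Rightarrow> real^'n \<Rightarrow> real^'n \<Rightarrow> nat \<Rightarrow> real" where
  "noise_avg M w \<alpha> \<beta> \<gamma> \<sigma> Q q x0 x1 t =
     (1 / real t) * (\<Sum>k\<le>t. LINT \<omega>|M.
        (norm (mom_iter \<alpha> \<beta> \<gamma> \<sigma> Q q (\<lambda>s. w s \<omega>) x0 x1 k - quad_argmin Q q))\<^sup>2)"

definition noise_amp :: "'a measure \<Rightarrow> (nat \<Rightarrow> 'a \<Rightarrow> real^'n) \<Rightarrow> real \<Rightarrow> real \<Rightarrow> real \<Rightarrow> real
    \<Rightarrow> real^'n^'n \<Rightarrow> real^'n \<Rightarrow> real^'n \<Rightarrow> real^'n \<Rightarrow> real" where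
  "noise_amp M w \<alpha> \<beta> \<gamma> \<sigma> Q q x0 x1 = lim (noise_avg M w \<alpha> \<beta> \<gamma> \<sigma> Q q x0 x1)"

definition Jhat :: "real \<Rightarrow> real \<Rightarrow> real \<Rightarrow> real \<Rightarrow> real \<Rightarrow> real" where
  "Jhat \<alpha> \<beta> \<gamma> \<sigma> lam =
     (let a = \<beta> - \<gamma> * \<alpha> * lam; b = (1 + \<gamma>) * \<alpha> * lam - (1 + \<beta>);
          d = a + b + 1; l = a - b + 1; h = 1 - a
      in \<sigma>\<^sup>2 * (d + l) / (2 * d * h * l))"

end

theory Submission
  imports Defs
begin



lemma sym_dot:
  fixes Q :: "real^'n^'n"
  assumes "transpose Q = Q"
  shows "x \<bullet> (Q *v y) = (Q *v x) \<bullet> y"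
proof -
  have "(Q *v x) \<bullet> y = (transpose Q *v x) \<bullet> y" using assms by simp
  also have "\<dots> = x \<bullet> (Q *v y)" by (simp add: transpose_matrix_vector dot_lmul_matrix)
  finally show ?thesis by simp
qed

lemma max_eigvec:
  fixes Q :: "real^'n^'n"
  assumes sym: "transpose Q = Q" and S: "subspace S" and inv: "\<forall>x\<in>S. Q *v x \<in> S"
    and v: "v \<in> S" "norm v = 1"
    and mx: "\<forall>y\<in>S \<inter> sphere 0 1. y \<bullet> (Q *v y) \<le> v \<bullet> (Q *v v)"
  shows "Q *v v = (v \<bullet> (Q *v v)) *\<^sub>R v"
proof -
  define \<mu> where "\<mu> = v \<bullet> (Q *v v)"
  have vv: "v \<bullet> v = 1" using v(2) by (simp add: norm_eq_1)
  have key: "y \<bullet> (Q *v v) = 0" if y: "y \<in> S" "y \<bullet> v = 0" for y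
  proof (rule ccontr)
    assume b0: "y \<bullet> (Q *v v) \<noteq> 0"
    define b where "b = y \<bullet> (Q *v v)"
    define K where "K = y \<bullet> (Q *v y) - \<mu> * (y \<bullet> y)"
    have ineq: "2 * t * b + t\<^sup>2 * K \<le> 0" for t
    proof -
      define z where "z = v + t *\<^sub>R y"
      have zS: "z \<in> S" unfolding z_def using S v y by (simp add: subspace_add subspace_scale)
      have zz: "z \<bullet> z = 1 + t\<^sup>2 * (y \<bullet> y)" unfolding z_def
        using vv y(2) by (simp add: algebra_simps inner_commute power2_eq_square)
      have zpos: "z \<bullet> z > 0" using zz by (simp add: add_pos_nonneg)
      have nz: "norm z > 0" using zpos by (simp add: inner_gt_zero_iff)
      define z1 where "z1 = (1 / norm z) *\<^sub>R z"
      have "z1 \<in> S \<inter> sphere 0 1" unfolding z1_def using zS nz S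
        by (simp add: subspace_scale)
      hence "z1 \<bullet> (Q *v z1) \<le> \<mu>" using mx \<mu>_def by blast
      moreover have "z1 \<bullet> (Q *v z1) = (z \<bullet> (Q *v z)) / (z \<bullet> z)"
        unfolding z1_def using nz
        by (simp add: matrix_vector_mult_scaleR power2_norm_eq_inner[symmetric] power2_eq_square)
      ultimately have "z \<bullet> (Q *v z) \<le> \<mu> * (z \<bullet> z)" using zpos
        by (simp add: divide_le_eq mult.commute)
      moreover have "z \<bullet> (Q *v z) = \<mu> + 2 * t * b + t\<^sup>2 * (y \<bullet> (Q *v y))"
      proof -
        have "v \<bullet> (Q *v y) = y \<bullet> (Q *v v)" using sym_dot[OF sym, of v y] by (simp add: inner_commute)
        thus ?thesis unfolding z_def \<mu>_def b_def
          by (simp add: matrix_vector_right_distrib matrix_vector_mult_scaleR algebra_simps power2_eq_square)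
      qed
      ultimately show ?thesis using zz unfolding K_def by (simp add: algebra_simps)
    qed
    define s where "s = 1 / (\<bar>K\<bar> + 1)"
    have s0: "s > 0" "s * (\<bar>K\<bar> + 1) = 1" unfolding s_def by auto
    have "2 * (b * s) * b + (b * s)\<^sup>2 * K \<le> 0" using ineq by blast
    hence "b\<^sup>2 * (s * (2 + s * K)) \<le> 0" by (simp add: algebra_simps power2_eq_square)
    moreover have "b\<^sup>2 > 0" using b0 b_def by simp
    moreover have "s * (2 + s * K) > 0"
    proof -
      have "s * (- \<bar>K\<bar>) \<le> s * K" using s0 by (intro mult_left_mono) auto
      hence "s * K \<ge> - (s * \<bar>K\<bar>)" by simp
      moreover have "s * \<bar>K\<bar> < 1" using s0 by (simp add: algebra_simps)
      ultimately show ?thesis using s0 by (simp add: mult_pos_pos)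
    qed
    ultimately show False by (smt (verit) mult_pos_pos)
  qed
  define z where "z = Q *v v - \<mu> *\<^sub>R v"
  have zS: "z \<in> S" unfolding z_def using S v inv by (simp add: subspace_diff subspace_scale)
  have zv: "z \<bullet> v = 0" unfolding z_def \<mu>_def using vv
    by (simp add: inner_diff_left inner_diff_right inner_commute)
  have "z \<bullet> (Q *v v) = 0" using key zS zv by blast
  hence "z \<bullet> z = 0" unfolding z_def using zv[unfolded z_def]
    by (simp add: inner_diff_right inner_diff_left)
  hence "z = 0" by simp
  thus ?thesis unfolding z_def \<mu>_def by simp
qed

lemma spectral_sub:
  fixes Q :: "real^'n^'n"
  assumes sym: "transpose Q = Q"
  shows "subspace S \<Longrightarrow> (\<forall>x\<in>S. Q *v x \<in> S) \<Longrightarrow> \<exists>B. B \<subseteq> S \<and> finite B \<and> pairwise orthogonal B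
     \<and> (\<forall>u\<in>B. norm u = 1 \<and> Q *v u = (u \<bullet> (Q *v u)) *\<^sub>R u) \<and> span B = S"
proof (induction "dim S" arbitrary: S rule: less_induct)
  case less
  show ?case
  proof (cases "S = {0}")
    case True
    thus ?thesis by (intro exI[of _ "{}"]) auto
  next
    case False
    then obtain x where x: "x \<in> S" "x \<noteq> 0" using less.prems(1) subspace_0 by blast
    define K where "K = S \<inter> sphere (0::real^'n) 1"
    have "(1 / norm x) *\<^sub>R x \<in> K" unfolding K_def using x less.prems(1)
      by (simp add: subspace_scale)
    hence Kne: "K \<noteq> {}" by blast
    have Kc: "compact K" unfolding K_def
      by (intro closed_Int_compact closed_subspace less.prems(1) compact_sphere)
    have "continuous_on K (\<lambda>y. y \<bullet> (Q *v y))"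
      by (intro continuous_on_inner continuous_on_id matrix_vector_mult_linear_continuous_on)
    then obtain v where v: "v \<in> K" and vmax: "\<forall>y\<in>K. y \<bullet> (Q *v y) \<le> v \<bullet> (Q *v v)"
      using continuous_attains_sup[OF Kc Kne] by blast
    have vS: "v \<in> S" and vn: "norm v = 1" using v unfolding K_def by auto
    have vv: "v \<bullet> v = 1" using vn by (simp add: norm_eq_1)
    have ev: "Q *v v = (v \<bullet> (Q *v v)) *\<^sub>R v"
      by (rule max_eigvec[OF sym less.prems(1) less.prems(2) vS vn]) (use vmax in \<open>simp add: K_def\<close>)
    define S' where "S' = {y \<in> S. y \<bullet> v = 0}"
    have "S' = S \<inter> {y. v \<bullet> y = 0}" unfolding S'_def by (auto simp: inner_commute)
    hence sub': "subspace S'" using less.prems(1) subspace_hyperplane[of v] by (simp add: subspace_inter)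
    have inv': "\<forall>x\<in>S'. Q *v x \<in> S'"
    proof
      fix y assume y: "y \<in> S'"
      have "(Q *v y) \<bullet> v = y \<bullet> (Q *v v)" using sym_dot[OF sym, of y v] by simp
      also have "\<dots> = (v \<bullet> (Q *v v)) * (y \<bullet> v)" by (subst ev) simp
      also have "\<dots> = 0" using y unfolding S'_def by simp
      finally show "Q *v y \<in> S'" using y less.prems(2) unfolding S'_def by auto
    qed
    have "S' \<subseteq> S" unfolding S'_def by auto
    moreover have "v \<in> S - S'" using vS vv unfolding S'_def by auto
    ultimately have ps: "S' \<subset> S" by blast
    have e1: "span S' = S'" using sub' by (simp add: span_eq_iff)
    have e2: "span S = S" using less.prems(1) by (simp add: span_eq_iff)
    have "span S' \<subset> span S" unfolding e1 e2 by (rule ps)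
    hence "dim S' < dim S" by (rule dim_psubset)
    hence "\<exists>B\<subseteq>S'. finite B \<and> pairwise orthogonal B \<and>
        (\<forall>u\<in>B. norm u = 1 \<and> Q *v u = (u \<bullet> (Q *v u)) *\<^sub>R u) \<and> span B = S'"
      by (rule less.hyps[OF _ sub' inv'])
    then obtain B' where B': "B' \<subseteq> S'" "finite B'" "pairwise orthogonal B'"
      "\<forall>u\<in>B'. norm u = 1 \<and> Q *v u = (u \<bullet> (Q *v u)) *\<^sub>R u" "span B' = S'"
      by blast
    have vB': "v \<notin> B'" using B'(1) vv unfolding S'_def by auto
    show ?thesis
    proof (intro exI[of _ "insert v B'"] conjI)
      show "insert v B' \<subseteq> S" using B'(1) vS unfolding S'_def by auto
      show "finite (insert v B')" using B'(2) by simp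
      show "pairwise orthogonal (insert v B')"
      proof -
        have "\<forall>y\<in>B'. orthogonal v y \<and> orthogonal y v"
          using B'(1) unfolding S'_def orthogonal_def by (auto simp: inner_commute)
        thus ?thesis using B'(3) vB' by (simp add: pairwise_insert)
      qed
      show "\<forall>u\<in>insert v B'. norm u = 1 \<and> Q *v u = (u \<bullet> (Q *v u)) *\<^sub>R u"
        using B'(4) vn ev by auto
      show "span (insert v B') = S"
      proof
        show "span (insert v B') \<subseteq> S"
          using \<open>insert v B' \<subseteq> S\<close> less.prems(1) by (simp add: span_minimal)
        show "S \<subseteq> span (insert v B')"
        proof
          fix z assume z: "z \<in> S"
          have "z - (z \<bullet> v) *\<^sub>R v \<in> S'" unfolding S'_def using z vS vv less.prems(1)
            by (simp add: subspace_diff subspace_scale inner_diff_left)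
          hence "z - (z \<bullet> v) *\<^sub>R v \<in> span (insert v B')" using B'(5)
            by (metis span_mono subset_insertI subsetD)
          moreover have "(z \<bullet> v) *\<^sub>R v \<in> span (insert v B')" by (simp add: span_base span_scale)
          ultimately have "z - (z \<bullet> v) *\<^sub>R v + (z \<bullet> v) *\<^sub>R v \<in> span (insert v B')"
            by (rule span_add)
          thus "z \<in> span (insert v B')" by simp
        qed
      qed
    qed
  qed
qed

lemma spectral:
  fixes Q :: "real^'n^'n"
  assumes sym: "transpose Q = Q"
  shows "\<exists>B. finite B \<and> pairwise orthogonal B
     \<and> (\<forall>u\<in>B. norm u = 1 \<and> Q *v u = (u \<bullet> (Q *v u)) *\<^sub>R u) \<and> span B = UNIV \<and> card B = CARD('n)"
proof -
  obtain B where B: "finite B" "pairwise orthogonal B"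
     "\<forall>u\<in>B. norm u = 1 \<and> Q *v u = (u \<bullet> (Q *v u)) *\<^sub>R u" "span B = UNIV"
    using spectral_sub[OF sym, of UNIV] by auto
  have "0 \<notin> B" using B(3) by force
  hence "independent B" using B(2) pairwise_orthogonal_independent by blast
  hence "card B = dim (span B)" by (rule dim_span_eq_card_independent[symmetric])
  also have "\<dots> = dim (UNIV :: (real^'n) set)" using B(4) by simp
  also have "\<dots> = CARD('n)" by (simp add: dim_UNIV)
  finally show ?thesis using B by blast
qed



fun lin2 :: "real \<Rightarrow> real \<Rightarrow> real \<Rightarrow> real \<Rightarrow> nat \<Rightarrow> real" where
  "lin2 p r a b 0 = a"
| "lin2 p r a b (Suc 0) = b"
| "lin2 p r a b (Suc (Suc n)) = p * lin2 p r a b (Suc n) + r * lin2 p r a b n"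

definition Cf :: "real \<Rightarrow> real \<Rightarrow> real" where
  "Cf p r = (1 - r) / ((1 + r) * (1 - r - p) * (1 - r + p))"

definition Vf :: "real \<Rightarrow> real \<Rightarrow> real \<Rightarrow> real \<Rightarrow> real" where
  "Vf p r x y = (1 + Cf p r * r\<^sup>2) * x\<^sup>2 + (2 * Cf p r * p * r / (1 - r)) * x * y + Cf p r * y\<^sup>2"

locale stab =
  fixes p r :: real
  assumes h: "0 < 1 + r" and d: "0 < 1 - r - p" and l: "0 < 1 - r + p"
begin

lemma r1: "r < 1" using d l by linarith

lemma Cpos: "Cf p r > 0" unfolding Cf_def using h d l r1 by simp

lemma Cid: "Cf p r * ((1 + r) * ((1 - r)\<^sup>2 - p\<^sup>2)) = (1 - r)"
proof -
  have "(1 + r) * ((1 - r)\<^sup>2 - p\<^sup>2) = (1 + r) * (1 - r - p) * (1 - r + p)"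
    by (simp add: algebra_simps power2_eq_square)
  thus ?thesis unfolding Cf_def using h d l by simp
qed

lemma V_step: "Vf p r y (p * y + r * x) = Vf p r x y - x\<^sup>2"
proof -
  define C where "C = Cf p r"
  define A where "A = 1 + C * r\<^sup>2"
  define B where "B = 2 * C * p * r / (1 - r)"
  have r1': "1 - r \<noteq> 0" using r1 by simp
  have hB: "B * (1 - r) = 2 * C * p * r" unfolding B_def using r1' by simp
  have CI: "C * ((1 + r) * ((1 - r)\<^sup>2 - p\<^sup>2)) = (1 - r)" using Cid C_def by simp
  have "(A + B * p + C * p\<^sup>2 - C) * (1 - r) = (1 - r) - C * ((1 + r) * ((1 - r)\<^sup>2 - p\<^sup>2))"
  proof -
    have "(A + B * p + C * p\<^sup>2 - C) * (1 - r) = (A + C * p\<^sup>2 - C) * (1 - r) + p * (B * (1 - r))"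
      by (simp add: algebra_simps)
    also have "\<dots> = (1 - r) - C * ((1 + r) * ((1 - r)\<^sup>2 - p\<^sup>2))"
      unfolding hB A_def by (simp add: algebra_simps power2_eq_square)
    finally show ?thesis .
  qed
  hence c1: "A + B * p + C * p\<^sup>2 - C = 0" using CI r1' by simp
  have c2: "B * r + 2 * C * p * r - B = 0" using hB by (simp add: algebra_simps)
  have c3: "C * r\<^sup>2 - A + 1 = 0" unfolding A_def by simp
  have V: "\<And>x y. Vf p r x y = A * x\<^sup>2 + B * x * y + C * y\<^sup>2"
    unfolding Vf_def A_def B_def C_def by simp
  have "Vf p r y (p * y + r * x) - (Vf p r x y - x\<^sup>2)
     = (A + B * p + C * p\<^sup>2 - C) * y\<^sup>2 + (B * r + 2 * C * p * r - B) * x * y + (C * r\<^sup>2 - A + 1) * x\<^sup>2"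
    unfolding V by (simp add: algebra_simps power2_eq_square)
  also have "\<dots> = 0" using c1 c2 c3 by simp
  finally show ?thesis by simp
qed

lemma V_nonneg: "Vf p r x y \<ge> 0"
proof -
  define C where "C = Cf p r"
  define q where "q = p / (1 - r)"
  define B where "B = 2 * C * r * q"
  have C0: "C > 0" using Cpos C_def by simp
  have r1': "1 - r > 0" using r1 by simp
  have "\<bar>p\<bar> \<le> 1 - r" using d l by linarith
  moreover have "\<bar>q\<bar> = \<bar>p\<bar> / (1 - r)" unfolding q_def using r1' by (simp add: abs_divide)
  ultimately have qa: "\<bar>q\<bar> \<le> 1" using r1' by (simp add: divide_le_eq_1_pos)
  have "q\<^sup>2 = \<bar>q\<bar> * \<bar>q\<bar>" by (simp add: power2_eq_square)
  also have "\<dots> \<le> 1" using qa by (intro mult_le_one) auto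
  finally have q2: "q\<^sup>2 \<le> 1" .
  have disc: "(1 + C * r\<^sup>2) * C - B\<^sup>2 / 4 \<ge> 0"
  proof -
    have "(1 + C * r\<^sup>2) * C - B\<^sup>2 / 4 = C + C\<^sup>2 * r\<^sup>2 * (1 - q\<^sup>2)"
      unfolding B_def by (simp add: algebra_simps power2_eq_square)
    also have "\<dots> \<ge> 0" using C0 q2 by (simp add: add_nonneg_nonneg)
    finally show ?thesis .
  qed
  have BB: "2 * Cf p r * p * r / (1 - r) = B" unfolding B_def q_def C_def by simp
  have "C * Vf p r x y = (C * y + B / 2 * x)\<^sup>2 + ((1 + C * r\<^sup>2) * C - B\<^sup>2 / 4) * x\<^sup>2"
  proof -
    have V: "Vf p r x y = (1 + C * r\<^sup>2) * x\<^sup>2 + B * x * y + C * y\<^sup>2"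
      unfolding Vf_def using BB C_def by simp
    show ?thesis unfolding V by (simp add: algebra_simps power2_eq_square)
  qed
  also have "\<dots> \<ge> 0" using disc by simp
  finally show ?thesis using C0 by (simp add: zero_le_mult_iff)
qed

lemma V_bound: "Vf p r x y \<le> (\<bar>1 + Cf p r * r\<^sup>2\<bar> + \<bar>2 * Cf p r * p * r / (1 - r)\<bar> + \<bar>Cf p r\<bar>) * (x\<^sup>2 + y\<^sup>2)"
proof -
  define A B C where "A = 1 + Cf p r * r\<^sup>2" "B = 2 * Cf p r * p * r / (1 - r)" "C = Cf p r"
  have xy: "\<bar>x * y\<bar> \<le> x\<^sup>2 + y\<^sup>2"
  proof -
    have "0 \<le> (\<bar>x\<bar> - \<bar>y\<bar>)\<^sup>2" by simp
    also have "\<dots> = x\<^sup>2 + y\<^sup>2 - 2 * \<bar>x * y\<bar>" by (simp add: power2_diff abs_mult)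
    finally show ?thesis by simp
  qed
  have "Vf p r x y = A * x\<^sup>2 + B * (x * y) + C * y\<^sup>2" unfolding Vf_def A_B_C_def by simp
  also have "\<dots> \<le> \<bar>A\<bar> * (x\<^sup>2 + y\<^sup>2) + \<bar>B\<bar> * (x\<^sup>2 + y\<^sup>2) + \<bar>C\<bar> * (x\<^sup>2 + y\<^sup>2)"
  proof -
    have "A * x\<^sup>2 \<le> \<bar>A * x\<^sup>2\<bar>" by (rule abs_ge_self)
    also have "\<dots> = \<bar>A\<bar> * x\<^sup>2" by (simp add: abs_mult)
    also have "\<dots> \<le> \<bar>A\<bar> * (x\<^sup>2 + y\<^sup>2)" by (intro mult_left_mono) auto
    finally have 1: "A * x\<^sup>2 \<le> \<bar>A\<bar> * (x\<^sup>2 + y\<^sup>2)" .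
    have "B * (x * y) \<le> \<bar>B * (x * y)\<bar>" by (rule abs_ge_self)
    also have "\<dots> = \<bar>B\<bar> * \<bar>x * y\<bar>" by (simp add: abs_mult)
    also have "\<dots> \<le> \<bar>B\<bar> * (x\<^sup>2 + y\<^sup>2)" by (intro mult_left_mono xy) auto
    finally have 2: "B * (x * y) \<le> \<bar>B\<bar> * (x\<^sup>2 + y\<^sup>2)" .
    have "C * y\<^sup>2 \<le> \<bar>C * y\<^sup>2\<bar>" by (rule abs_ge_self)
    also have "\<dots> = \<bar>C\<bar> * y\<^sup>2" by (simp add: abs_mult)
    also have "\<dots> \<le> \<bar>C\<bar> * (x\<^sup>2 + y\<^sup>2)" by (intro mult_left_mono) auto
    finally have 3: "C * y\<^sup>2 \<le> \<bar>C\<bar> * (x\<^sup>2 + y\<^sup>2)" .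
    from 1 2 3 show ?thesis by linarith
  qed
  also have "\<dots> = (\<bar>A\<bar> + \<bar>B\<bar> + \<bar>C\<bar>) * (x\<^sup>2 + y\<^sup>2)" by (simp only: distrib_right)
  finally show ?thesis unfolding A_B_C_def .
qed

lemma sumsq: "(\<Sum>n<N. (lin2 p r a b n)\<^sup>2) = Vf p r a b - Vf p r (lin2 p r a b N) (lin2 p r a b (Suc N))"
proof (induction N)
  case 0 then show ?case by simp
next
  case (Suc N)
  have "Vf p r (lin2 p r a b (Suc N)) (lin2 p r a b (Suc (Suc N)))
     = Vf p r (lin2 p r a b N) (lin2 p r a b (Suc N)) - (lin2 p r a b N)\<^sup>2"
    using V_step by simp
  with Suc show ?case by simp
qed

lemma sumsq_le: "(\<Sum>n<N. (lin2 p r a b n)\<^sup>2) \<le> Vf p r a b"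
  using sumsq[where N=N and a=a and b=b] V_nonneg[of "lin2 p r a b N" "lin2 p r a b (Suc N)"] by linarith

end

definition swn :: "'a measure \<Rightarrow> (nat \<Rightarrow> 'a \<Rightarrow> real) \<Rightarrow> bool" where
  "swn M \<nu> \<longleftrightarrow> prob_space M \<and> (\<forall>j. integrable M (\<nu> j) \<and> (LINT \<omega>|M. \<nu> j \<omega>) = 0)
     \<and> (\<forall>i j. integrable M (\<lambda>\<omega>. \<nu> i \<omega> * \<nu> j \<omega>) \<and> (LINT \<omega>|M. \<nu> i \<omega> * \<nu> j \<omega>) = (if i = j then 1 else 0))"

lemma sq_moment:
  assumes W: "swn M \<nu>" and I: "finite I"
  shows "integrable M (\<lambda>\<omega>. (a + (\<Sum>j\<in>I. c j * \<nu> j \<omega>))\<^sup>2)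
    \<and> (LINT \<omega>|M. (a + (\<Sum>j\<in>I. c j * \<nu> j \<omega>))\<^sup>2) = a\<^sup>2 + (\<Sum>j\<in>I. (c j)\<^sup>2)"
proof -
  have P: "prob_space M" using W unfolding swn_def by simp
  then have F: "finite_measure M" by (rule prob_space.finite_measure)
  have m1: "measure M (space M) = 1" using P by (rule prob_space.prob_space)
  have i1: "integrable M (\<nu> j)" "(LINT \<omega>|M. \<nu> j \<omega>) = 0" for j using W unfolding swn_def by auto
  have i2: "integrable M (\<lambda>\<omega>. \<nu> i \<omega> * \<nu> j \<omega>)"
     "(LINT \<omega>|M. \<nu> i \<omega> * \<nu> j \<omega>) = (if i = j then 1 else 0)" for i j using W unfolding swn_def by auto
  define X where "X = (\<lambda>\<omega>. \<Sum>j\<in>I. c j * \<nu> j \<omega>)"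
  define Y where "Y = (\<lambda>\<omega>. \<Sum>i\<in>I. \<Sum>j\<in>I. (c i * c j) * (\<nu> i \<omega> * \<nu> j \<omega>))"
  have eq: "(a + (\<Sum>j\<in>I. c j * \<nu> j \<omega>))\<^sup>2 = a\<^sup>2 + (2 * a) * X \<omega> + Y \<omega>" for \<omega>
  proof -
    have "X \<omega> * X \<omega> = Y \<omega>" unfolding X_def Y_def sum_product by (simp add: algebra_simps)
    moreover have "(a + (\<Sum>j\<in>I. c j * \<nu> j \<omega>)) = a + X \<omega>" unfolding X_def by simp
    ultimately show ?thesis by (simp add: power2_eq_square algebra_simps)
  qed
  have iX: "integrable M X" unfolding X_def
    by (intro Bochner_Integration.integrable_sum integrable_mult_right i1)
  have iY: "integrable M Y" unfolding Y_def
    by (intro Bochner_Integration.integrable_sum integrable_mult_right i2)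
  have iC: "integrable M (\<lambda>\<omega>. a\<^sup>2)" using F by (rule finite_measure.integrable_const)
  have iX2: "integrable M (\<lambda>\<omega>. (2 * a) * X \<omega>)" using iX by (rule integrable_mult_right)
  have eX: "(LINT \<omega>|M. X \<omega>) = 0" unfolding X_def
    by (subst Bochner_Integration.integral_sum) (auto intro: integrable_mult_right i1 simp: i1)
  have eY: "(LINT \<omega>|M. Y \<omega>) = (\<Sum>j\<in>I. (c j)\<^sup>2)"
  proof -
    have "(LINT \<omega>|M. Y \<omega>) = (\<Sum>i\<in>I. \<Sum>j\<in>I. (c i * c j) * (if i = j then 1 else 0))"
    proof -
      have in1: "integrable M (\<lambda>\<omega>. \<Sum>j\<in>I. (c i * c j) * (\<nu> i \<omega> * \<nu> j \<omega>))" for i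
        by (intro Bochner_Integration.integrable_sum integrable_mult_right i2)
      have in2: "(LINT \<omega>|M. (\<Sum>j\<in>I. (c i * c j) * (\<nu> i \<omega> * \<nu> j \<omega>)))
          = (\<Sum>j\<in>I. (c i * c j) * (if i = j then 1 else 0))" for i
        by (subst Bochner_Integration.integral_sum) (auto intro: integrable_mult_right i2 simp: i2(2))
      show ?thesis unfolding Y_def
        by (subst Bochner_Integration.integral_sum) (auto intro: in1 simp: in2)
    qed
    also have "\<dots> = (\<Sum>j\<in>I. (c j)\<^sup>2)" using I by (simp add: power2_eq_square if_distrib cong: if_cong)
    finally show ?thesis .
  qed
  have "integrable M (\<lambda>\<omega>. a\<^sup>2 + (2 * a) * X \<omega> + Y \<omega>)"
    using iC iX2 iY by (intro Bochner_Integration.integrable_add) auto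
  moreover have "(LINT \<omega>|M. a\<^sup>2 + (2 * a) * X \<omega> + Y \<omega>) = a\<^sup>2 + (\<Sum>j\<in>I. (c j)\<^sup>2)"
    using iC iX2 iY eX eY m1
    by (simp add: Bochner_Integration.integral_add Bochner_Integration.integrable_add)
  ultimately show ?thesis unfolding eq by simp
qed

lemma rep:
  assumes rec: "\<And>k \<omega>. \<psi> (Suc (Suc k)) \<omega> = p * \<psi> (Suc k) \<omega> + r * \<psi> k \<omega> + \<sigma> * \<nu> k \<omega>"
    and i0: "\<And>\<omega>. \<psi> 0 \<omega> = y0" and i1: "\<And>\<omega>. \<psi> (Suc 0) \<omega> = y1"
  shows "\<psi> k \<omega> = lin2 p r y0 y1 k + (\<Sum>j<k. (\<sigma> * lin2 p r 0 1 (k - 1 - j)) * \<nu> j \<omega>)"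
proof (induction k rule: less_induct)
  case (less k)
  show ?case
  proof (cases k)
    case 0 thus ?thesis using i0 by simp
  next
    case (Suc k1)
    show ?thesis
    proof (cases k1)
      case 0 thus ?thesis using i1 Suc by simp
    next
      case (Suc n)
      define G where "G = lin2 p r 0 1"
      have k: "k = Suc (Suc n)" using Suc \<open>k = Suc k1\<close> by simp
      have IH1: "\<psi> (Suc n) \<omega> = lin2 p r y0 y1 (Suc n) + (\<Sum>j<Suc n. (\<sigma> * G (n - j)) * \<nu> j \<omega>)"
        using less[of "Suc n"] k G_def by simp
      have IH0: "\<psi> n \<omega> = lin2 p r y0 y1 n + (\<Sum>j<n. (\<sigma> * G (n - 1 - j)) * \<nu> j \<omega>)"
        using less[of n] k G_def by simp
      have cong: "(\<Sum>j<n. (\<sigma> * G (Suc n - j)) * \<nu> j \<omega>)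
          = p * (\<Sum>j<n. (\<sigma> * G (n - j)) * \<nu> j \<omega>) + r * (\<Sum>j<n. (\<sigma> * G (n - 1 - j)) * \<nu> j \<omega>)"
      proof -
        have "(\<Sum>j<n. (\<sigma> * G (Suc n - j)) * \<nu> j \<omega>)
            = (\<Sum>j<n. p * ((\<sigma> * G (n - j)) * \<nu> j \<omega>) + r * ((\<sigma> * G (n - 1 - j)) * \<nu> j \<omega>))"
        proof (rule sum.cong)
          fix j assume "j \<in> {..<n}"
          hence j: "Suc n - j = Suc (Suc (n - 1 - j))" "n - j = Suc (n - 1 - j)" by auto
          show "(\<sigma> * G (Suc n - j)) * \<nu> j \<omega> = p * ((\<sigma> * G (n - j)) * \<nu> j \<omega>) + r * ((\<sigma> * G (n - 1 - j)) * \<nu> j \<omega>)"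
            unfolding j G_def by (simp add: algebra_simps)
        qed simp
        thus ?thesis by (simp add: sum.distrib sum_distrib_left)
      qed
      have "\<psi> k \<omega> = p * \<psi> (Suc n) \<omega> + r * \<psi> n \<omega> + \<sigma> * \<nu> n \<omega>" using rec k by simp
      also have "\<dots> = lin2 p r y0 y1 k + (\<Sum>j<k. (\<sigma> * G (k - 1 - j)) * \<nu> j \<omega>)"
        unfolding IH1 IH0 k using cong by (simp add: G_def algebra_simps)
      finally show ?thesis unfolding G_def .
    qed
  qed
qed


lemma (in stab) scalar_main:
  assumes W: "swn M \<nu>"
    and rec: "\<And>k \<omega>. \<psi> (Suc (Suc k)) \<omega> = p * \<psi> (Suc k) \<omega> + r * \<psi> k \<omega> + \<sigma> * \<nu> k \<omega>"
    and i0: "\<And>\<omega>. \<psi> 0 \<omega> = y0" and i1: "\<And>\<omega>. \<psi> (Suc 0) \<omega> = y1"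
  shows "\<exists>Bd. \<forall>k. integrable M (\<lambda>\<omega>. (\<psi> k \<omega>)\<^sup>2)
      \<and> (\<forall>t. \<bar>\<Sum>k\<le>t. ((LINT \<omega>|M. (\<psi> k \<omega>)\<^sup>2) - \<sigma>\<^sup>2 * Cf p r)\<bar> \<le> Bd)"
proof -
  define G where "G = lin2 p r 0 1"
  define H where "H = lin2 p r y0 y1"
  define K where "K = \<bar>1 + Cf p r * r\<^sup>2\<bar> + \<bar>2 * Cf p r * p * r / (1 - r)\<bar> + \<bar>Cf p r\<bar>"
  have K0: "K \<ge> 0" unfolding K_def by simp
  have VK: "Vf p r x y \<le> K * (x\<^sup>2 + y\<^sup>2)" for x y unfolding K_def by (rule V_bound)
  have psi: "\<psi> k \<omega> = H k + (\<Sum>j<k. (\<sigma> * G (k - 1 - j)) * \<nu> j \<omega>)" for k \<omega>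
    unfolding H_def G_def by (rule rep[OF rec i0 i1])
  have mom: "integrable M (\<lambda>\<omega>. (\<psi> k \<omega>)\<^sup>2) \<and>
      (LINT \<omega>|M. (\<psi> k \<omega>)\<^sup>2) = (H k)\<^sup>2 + (\<Sum>j<k. (\<sigma> * G (k - 1 - j))\<^sup>2)" for k
    unfolding psi by (rule sq_moment[OF W]) simp
  have V01: "Vf p r 0 1 = Cf p r" unfolding Vf_def by simp
  have eq: "(LINT \<omega>|M. (\<psi> k \<omega>)\<^sup>2) - \<sigma>\<^sup>2 * Cf p r = (H k)\<^sup>2 - \<sigma>\<^sup>2 * Vf p r (G k) (G (Suc k))" for k
  proof -
    have "(\<Sum>j<k. (\<sigma> * G (k - 1 - j))\<^sup>2) = \<sigma>\<^sup>2 * (\<Sum>j<k. (G (k - Suc j))\<^sup>2)"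
      by (simp add: power_mult_distrib sum_distrib_left)
    also have "\<dots> = \<sigma>\<^sup>2 * (\<Sum>j<k. (G j)\<^sup>2)"
      using sum.nat_diff_reindex[of "\<lambda>i. (G i)\<^sup>2" k] by simp
    also have "\<dots> = \<sigma>\<^sup>2 * (Cf p r - Vf p r (G k) (G (Suc k)))"
      using sumsq[where a=0 and b=1 and N=k] V01 unfolding G_def by simp
    finally show ?thesis using mom[of k] by (simp add: algebra_simps)
  qed
  define Bd where "Bd = Vf p r y0 y1 + \<sigma>\<^sup>2 * K * (2 * Cf p r)"
  have bound: "\<bar>\<Sum>k\<le>t. ((LINT \<omega>|M. (\<psi> k \<omega>)\<^sup>2) - \<sigma>\<^sup>2 * Cf p r)\<bar> \<le> Bd" for t
  proof -
    have sH: "(\<Sum>k\<le>t. (H k)\<^sup>2) \<le> Vf p r y0 y1"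
      using sumsq_le[where a=y0 and b=y1 and N="Suc t"] unfolding H_def lessThan_Suc_atMost .
    have sG0: "(\<Sum>k\<le>t. (G k)\<^sup>2) \<le> Cf p r"
      using sumsq_le[where a=0 and b=1 and N="Suc t"] V01 unfolding G_def lessThan_Suc_atMost by simp
    have sG1: "(\<Sum>k\<le>t. (G (Suc k))\<^sup>2) \<le> Cf p r"
    proof -
      have "(\<Sum>k<Suc (Suc t). (G k)\<^sup>2) = (\<Sum>k<Suc t. (G (Suc k))\<^sup>2) + (G 0)\<^sup>2"
        by (rule sum.lessThan_Suc_shift[THEN trans]) simp
      moreover have "G 0 = 0" unfolding G_def by simp
      moreover have "(\<Sum>k<Suc (Suc t). (G k)\<^sup>2) \<le> Cf p r"
        using sumsq_le[where a=0 and b=1 and N="Suc (Suc t)"] V01 unfolding G_def by simp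
      ultimately show ?thesis unfolding lessThan_Suc_atMost by simp
    qed
    have Vn: "0 \<le> (\<Sum>k\<le>t. Vf p r (G k) (G (Suc k)))" by (intro sum_nonneg V_nonneg)
    have Vb: "(\<Sum>k\<le>t. Vf p r (G k) (G (Suc k))) \<le> K * (2 * Cf p r)"
    proof -
      have "(\<Sum>k\<le>t. Vf p r (G k) (G (Suc k))) \<le> (\<Sum>k\<le>t. K * ((G k)\<^sup>2 + (G (Suc k))\<^sup>2))"
        by (intro sum_mono VK)
      also have "\<dots> = K * ((\<Sum>k\<le>t. (G k)\<^sup>2) + (\<Sum>k\<le>t. (G (Suc k))\<^sup>2))"
        by (simp only: sum_distrib_left[symmetric] sum.distrib)
      also have "\<dots> \<le> K * (2 * Cf p r)" using sG0 sG1 K0 by (intro mult_left_mono) auto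
      finally show ?thesis .
    qed
    have Hn: "0 \<le> (\<Sum>k\<le>t. (H k)\<^sup>2)" by (intro sum_nonneg) simp
    have "(\<Sum>k\<le>t. ((LINT \<omega>|M. (\<psi> k \<omega>)\<^sup>2) - \<sigma>\<^sup>2 * Cf p r))
        = (\<Sum>k\<le>t. (H k)\<^sup>2) - \<sigma>\<^sup>2 * (\<Sum>k\<le>t. Vf p r (G k) (G (Suc k)))"
      unfolding eq by (simp add: sum_subtractf sum_distrib_left)
    moreover have "\<sigma>\<^sup>2 * (\<Sum>k\<le>t. Vf p r (G k) (G (Suc k))) \<le> \<sigma>\<^sup>2 * (K * (2 * Cf p r))"
      using Vb by (intro mult_left_mono) auto
    moreover have "0 \<le> \<sigma>\<^sup>2 * (\<Sum>k\<le>t. Vf p r (G k) (G (Suc k)))" using Vn by simp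
    ultimately show ?thesis unfolding Bd_def using sH Hn by (simp add: abs_le_iff)
  qed
  show ?thesis using mom bound by blast
qed




lemma white_proj:
  fixes w :: "nat \<Rightarrow> 'a \<Rightarrow> real^'n"
  assumes W: "white_noise M w" and u: "norm u = 1"
  shows "swn M (\<lambda>j \<omega>. u \<bullet> w j \<omega>)"
proof -
  have P: "prob_space M" and i1: "\<And>t i. integrable M (\<lambda>\<omega>. w t \<omega> $ i)" and e1: "\<And>t i. (LINT \<omega>|M. w t \<omega> $ i) = 0"
    and i2: "\<And>t s i j. integrable M (\<lambda>\<omega>. w t \<omega> $ i * w s \<omega> $ j)"
    and e2: "\<And>t s i j. (LINT \<omega>|M. w t \<omega> $ i * w s \<omega> $ j) = (if t = s \<and> i = j then 1 else 0)"
    using W unfolding white_noise_def by auto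
  have uu: "(\<Sum>i\<in>UNIV. u $ i * u $ i) = 1" using u by (simp add: norm_eq_1 inner_vec_def)
  have nu: "u \<bullet> w j \<omega> = (\<Sum>i\<in>UNIV. u $ i * w j \<omega> $ i)" for j \<omega> by (simp add: inner_vec_def)
  have A: "integrable M (\<lambda>\<omega>. u \<bullet> w j \<omega>) \<and> (LINT \<omega>|M. u \<bullet> w j \<omega>) = 0" for j
    unfolding nu
    by (simp add: Bochner_Integration.integral_sum Bochner_Integration.integrable_sum integrable_mult_right i1 e1)
  have prod: "(u \<bullet> w j \<omega>) * (u \<bullet> w k \<omega>) = (\<Sum>a\<in>UNIV. \<Sum>b\<in>UNIV. (u $ a * u $ b) * (w j \<omega> $ a * w k \<omega> $ b))" for j k \<omega>
    unfolding nu sum_product by (simp add: algebra_simps)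
  have B: "integrable M (\<lambda>\<omega>. (u \<bullet> w j \<omega>) * (u \<bullet> w k \<omega>)) \<and>
      (LINT \<omega>|M. (u \<bullet> w j \<omega>) * (u \<bullet> w k \<omega>)) = (if j = k then 1 else 0)" for j k
  proof -
    have in1: "integrable M (\<lambda>\<omega>. \<Sum>b\<in>UNIV. (u $ a * u $ b) * (w j \<omega> $ a * w k \<omega> $ b))" for a
      by (intro Bochner_Integration.integrable_sum integrable_mult_right i2)
    have in2: "(LINT \<omega>|M. (\<Sum>b\<in>UNIV. (u $ a * u $ b) * (w j \<omega> $ a * w k \<omega> $ b)))
        = (\<Sum>b\<in>UNIV. (u $ a * u $ b) * (if j = k \<and> a = b then 1 else 0))" for a
      by (subst Bochner_Integration.integral_sum) (auto intro: integrable_mult_right i2 simp: e2)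
    have "(LINT \<omega>|M. (u \<bullet> w j \<omega>) * (u \<bullet> w k \<omega>)) = (\<Sum>a\<in>UNIV. \<Sum>b\<in>UNIV. (u $ a * u $ b) * (if j = k \<and> a = b then 1 else 0))"
      unfolding prod by (subst Bochner_Integration.integral_sum) (auto intro: in1 simp: in2)
    also have "\<dots> = (if j = k then 1 else 0)"
      using uu by (cases "j = k") (simp_all add: if_distrib cong: if_cong)
    finally show ?thesis unfolding prod
      by (simp add: Bochner_Integration.integrable_sum in1)
  qed
  show ?thesis unfolding swn_def using P A B by blast
qed

lemma mom_iter_0: "mom_iter \<alpha> \<beta> \<gamma> \<sigma> Q q w x0 x1 0 = x0"
  unfolding mom_iter_def by simp

lemma mom_state_snd: "snd (mom_state \<alpha> \<beta> \<gamma> \<sigma> Q q w x0 x1 k) = fst (mom_state \<alpha> \<beta> \<gamma> \<sigma> Q q w x0 x1 (Suc k))"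
  by (simp add: split_beta)

lemma mom_iter_1: "mom_iter \<alpha> \<beta> \<gamma> \<sigma> Q q w x0 x1 (Suc 0) = x1"
  unfolding mom_iter_def by simp

lemma mom_iter_SS: "mom_iter \<alpha> \<beta> \<gamma> \<sigma> Q q w x0 x1 (Suc (Suc k)) =
   (let a = mom_iter \<alpha> \<beta> \<gamma> \<sigma> Q q w x0 x1 k; b = mom_iter \<alpha> \<beta> \<gamma> \<sigma> Q q w x0 x1 (Suc k) in
    b + \<beta> *\<^sub>R (b - a) - \<alpha> *\<^sub>R quad_grad Q q (b + \<gamma> *\<^sub>R (b - a)) + \<sigma> *\<^sub>R w k)"
proof -
  have "mom_iter \<alpha> \<beta> \<gamma> \<sigma> Q q w x0 x1 (Suc k) = snd (mom_state \<alpha> \<beta> \<gamma> \<sigma> Q q w x0 x1 k)"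
    unfolding mom_iter_def by (simp add: split_beta)
  thus ?thesis unfolding mom_iter_def by (simp add: split_beta Let_def)
qed

lemma parseval:
  fixes B :: "(real^'n) set"
  assumes fin: "finite B" and orth: "pairwise orthogonal B" and nrm: "\<forall>u\<in>B. norm u = 1"
    and sp: "span B = UNIV"
  shows "(norm e)\<^sup>2 = (\<Sum>u\<in>B. (u \<bullet> e)\<^sup>2)"
proof -
  have "e \<in> span B" using sp by simp
  then obtain c where e: "e = (\<Sum>v\<in>B. c v *\<^sub>R v)" using span_finite[OF fin] by auto
  have uv: "u \<bullet> v = (if v = u then 1 else 0)" if "u \<in> B" "v \<in> B" for u v
    using orth nrm that unfolding pairwise_def orthogonal_def by (auto simp: norm_eq_1)
  have ce: "u \<bullet> e = c u" if u: "u \<in> B" for u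
  proof -
    have "u \<bullet> e = (\<Sum>v\<in>B. c v * (u \<bullet> v))" unfolding e by (simp add: inner_sum_right)
    also have "\<dots> = (\<Sum>v\<in>B. if v = u then c v else 0)" by (rule sum.cong) (auto simp: uv u)
    also have "\<dots> = c u" using fin u by simp
    finally show ?thesis .
  qed
  have "(norm e)\<^sup>2 = e \<bullet> e" by (simp add: power2_norm_eq_inner)
  also have "\<dots> = (\<Sum>v\<in>B. c v * (v \<bullet> e))" by (subst (2) e) (simp add: inner_sum_right inner_commute)
  also have "\<dots> = (\<Sum>v\<in>B. (v \<bullet> e)\<^sup>2)" by (rule sum.cong) (auto simp: ce power2_eq_square)
  finally show ?thesis .
qed


lemma vec_main:
  fixes Q :: "real^'n^'n" and w :: "nat \<Rightarrow> 'a \<Rightarrow> real^'n"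
  assumes sym: "transpose Q = Q" and xs: "Q *v xs = q" and am: "quad_argmin Q q = xs"
    and fin: "finite B" and orth: "pairwise orthogonal B"
    and eig: "\<forall>u\<in>B. norm u = 1 \<and> Q *v u = lam u *\<^sub>R u" and sp: "span B = UNIV"
    and st: "\<forall>u\<in>B. stab (1 + \<beta> - \<alpha> * lam u) (- \<beta>)"
    and W: "white_noise M w"
  shows "noise_avg M w \<alpha> \<beta> 0 \<sigma> Q q x0 x1 \<longlonglongrightarrow> (\<Sum>u\<in>B. \<sigma>\<^sup>2 * Cf (1 + \<beta> - \<alpha> * lam u) (- \<beta>))"
proof -
  define X where "X = (\<lambda>k \<omega>. mom_iter \<alpha> \<beta> 0 \<sigma> Q q (\<lambda>s. w s \<omega>) x0 x1 k)"
  define \<psi> where "\<psi> = (\<lambda>u k \<omega>. u \<bullet> (X k \<omega> - xs))"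
  define S where "S = (\<Sum>u\<in>B. \<sigma>\<^sup>2 * Cf (1 + \<beta> - \<alpha> * lam u) (- \<beta>))"
  have rec: "\<psi> u (Suc (Suc k)) \<omega> = (1 + \<beta> - \<alpha> * lam u) * \<psi> u (Suc k) \<omega> + (- \<beta>) * \<psi> u k \<omega>
      + \<sigma> * (u \<bullet> w k \<omega>)" if u: "u \<in> B" for u k \<omega>
  proof -
    have Qu: "Q *v u = lam u *\<^sub>R u" using eig u by blast
    have g: "u \<bullet> quad_grad Q q (X (Suc k) \<omega>) = lam u * \<psi> u (Suc k) \<omega>"
    proof -
      have "quad_grad Q q (X (Suc k) \<omega>) = Q *v (X (Suc k) \<omega> - xs)"
        unfolding quad_grad_def using xs by (simp add: matrix_vector_mult_diff_distrib)
      hence "u \<bullet> quad_grad Q q (X (Suc k) \<omega>) = (Q *v u) \<bullet> (X (Suc k) \<omega> - xs)"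
        using sym_dot[OF sym] by simp
      thus ?thesis unfolding Qu \<psi>_def by simp
    qed
    have E: "X (Suc (Suc k)) \<omega> = X (Suc k) \<omega> + \<beta> *\<^sub>R (X (Suc k) \<omega> - X k \<omega>)
        - \<alpha> *\<^sub>R quad_grad Q q (X (Suc k) \<omega>) + \<sigma> *\<^sub>R w k \<omega>"
      unfolding X_def by (simp add: mom_iter_SS Let_def)
    have "\<psi> u (Suc (Suc k)) \<omega> = u \<bullet> (X (Suc k) \<omega> + \<beta> *\<^sub>R (X (Suc k) \<omega> - X k \<omega>)
        - \<alpha> *\<^sub>R quad_grad Q q (X (Suc k) \<omega>) + \<sigma> *\<^sub>R w k \<omega> - xs)"
      unfolding \<psi>_def E by (rule refl)
    also have "\<dots> = \<psi> u (Suc k) \<omega> + \<beta> * (\<psi> u (Suc k) \<omega> - \<psi> u k \<omega>)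
        - \<alpha> * (u \<bullet> quad_grad Q q (X (Suc k) \<omega>)) + \<sigma> * (u \<bullet> w k \<omega>)"
      unfolding \<psi>_def by (simp add: inner_diff_right inner_add_right algebra_simps)
    finally have "\<psi> u (Suc (Suc k)) \<omega> = \<psi> u (Suc k) \<omega> + \<beta> * (\<psi> u (Suc k) \<omega> - \<psi> u k \<omega>)
        - \<alpha> * (u \<bullet> quad_grad Q q (X (Suc k) \<omega>)) + \<sigma> * (u \<bullet> w k \<omega>)" .
    thus ?thesis unfolding g by (simp add: algebra_simps)
  qed
  have "\<forall>u\<in>B. \<exists>Bd. \<forall>k. integrable M (\<lambda>\<omega>. (\<psi> u k \<omega>)\<^sup>2)
      \<and> (\<forall>t. \<bar>\<Sum>k\<le>t. ((LINT \<omega>|M. (\<psi> u k \<omega>)\<^sup>2) - \<sigma>\<^sup>2 * Cf (1 + \<beta> - \<alpha> * lam u) (- \<beta>))\<bar> \<le> Bd)"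
  proof
    fix u assume u: "u \<in> B"
    show "\<exists>Bd. \<forall>k. integrable M (\<lambda>\<omega>. (\<psi> u k \<omega>)\<^sup>2)
      \<and> (\<forall>t. \<bar>\<Sum>k\<le>t. ((LINT \<omega>|M. (\<psi> u k \<omega>)\<^sup>2) - \<sigma>\<^sup>2 * Cf (1 + \<beta> - \<alpha> * lam u) (- \<beta>))\<bar> \<le> Bd)"
    proof (rule stab.scalar_main)
      show "stab (1 + \<beta> - \<alpha> * lam u) (- \<beta>)" using st u by blast
      show "swn M (\<lambda>j \<omega>. u \<bullet> w j \<omega>)" using white_proj[OF W] eig u by blast
      show "\<psi> u (Suc (Suc k)) \<omega> = (1 + \<beta> - \<alpha> * lam u) * \<psi> u (Suc k) \<omega> + (- \<beta>) * \<psi> u k \<omega>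
      + \<sigma> * (u \<bullet> w k \<omega>)" for k \<omega> by (rule rec[OF u])
      show "\<psi> u 0 \<omega> = u \<bullet> (x0 - xs)" for \<omega> unfolding \<psi>_def X_def by (simp add: mom_iter_0)
      show "\<psi> u (Suc 0) \<omega> = u \<bullet> (x1 - xs)" for \<omega> unfolding \<psi>_def X_def by (simp add: mom_iter_1)
    qed
  qed
  then obtain Bd where Bd: "\<And>u k. u \<in> B \<Longrightarrow> integrable M (\<lambda>\<omega>. (\<psi> u k \<omega>)\<^sup>2)"
    "\<And>u t. u \<in> B \<Longrightarrow> \<bar>\<Sum>k\<le>t. ((LINT \<omega>|M. (\<psi> u k \<omega>)\<^sup>2) - \<sigma>\<^sup>2 * Cf (1 + \<beta> - \<alpha> * lam u) (- \<beta>))\<bar> \<le> Bd u"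
    by metis
  define D where "D = (\<Sum>u\<in>B. Bd u)"
  have nrm: "\<forall>u\<in>B. norm u = 1" using eig by blast
  have avg: "noise_avg M w \<alpha> \<beta> 0 \<sigma> Q q x0 x1 t = (1 / real t) * (\<Sum>k\<le>t. \<Sum>u\<in>B. LINT \<omega>|M. (\<psi> u k \<omega>)\<^sup>2)" for t
  proof -
    have "(LINT \<omega>|M. (norm (X k \<omega> - xs))\<^sup>2) = (\<Sum>u\<in>B. LINT \<omega>|M. (\<psi> u k \<omega>)\<^sup>2)" for k
    proof -
      have "(LINT \<omega>|M. (norm (X k \<omega> - xs))\<^sup>2) = (LINT \<omega>|M. (\<Sum>u\<in>B. (\<psi> u k \<omega>)\<^sup>2))"
        unfolding \<psi>_def using parseval[OF fin orth nrm sp] by simp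
      also have "\<dots> = (\<Sum>u\<in>B. LINT \<omega>|M. (\<psi> u k \<omega>)\<^sup>2)"
        by (rule Bochner_Integration.integral_sum) (rule Bd(1))
      finally show ?thesis .
    qed
    thus ?thesis unfolding noise_avg_def am X_def by simp
  qed
  have R: "\<bar>(\<Sum>k\<le>t. \<Sum>u\<in>B. LINT \<omega>|M. (\<psi> u k \<omega>)\<^sup>2) - real (Suc t) * S\<bar> \<le> D" for t
  proof -
    have "(\<Sum>k\<le>t. \<Sum>u\<in>B. LINT \<omega>|M. (\<psi> u k \<omega>)\<^sup>2) - real (Suc t) * S
        = (\<Sum>u\<in>B. \<Sum>k\<le>t. ((LINT \<omega>|M. (\<psi> u k \<omega>)\<^sup>2) - \<sigma>\<^sup>2 * Cf (1 + \<beta> - \<alpha> * lam u) (- \<beta>)))"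
      unfolding S_def by (simp add: sum_subtractf sum.swap[of _ "{..t}"] sum_distrib_left)
    also have "\<bar>\<dots>\<bar> \<le> (\<Sum>u\<in>B. \<bar>\<Sum>k\<le>t. ((LINT \<omega>|M. (\<psi> u k \<omega>)\<^sup>2) - \<sigma>\<^sup>2 * Cf (1 + \<beta> - \<alpha> * lam u) (- \<beta>))\<bar>)"
      by (rule sum_abs)
    also have "\<dots> \<le> D" unfolding D_def by (intro sum_mono Bd(2))
    finally show ?thesis .
  qed
  have D0: "D \<ge> 0" using R[of 0] by linarith
  have "(\<lambda>t. noise_avg M w \<alpha> \<beta> 0 \<sigma> Q q x0 x1 t - S) \<longlonglongrightarrow> 0"
  proof (rule Lim_null_comparison)
    show "(\<lambda>t. (\<bar>S\<bar> + D) / real t) \<longlonglongrightarrow> 0" by (rule lim_const_over_n)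
    show "\<forall>\<^sub>F t in sequentially. norm (noise_avg M w \<alpha> \<beta> 0 \<sigma> Q q x0 x1 t - S) \<le> (\<bar>S\<bar> + D) / real t"
      unfolding eventually_sequentially
    proof (intro exI[of _ 1] allI impI)
      fix t :: nat assume t: "1 \<le> t"
      define T where "T = (\<Sum>k\<le>t. \<Sum>u\<in>B. LINT \<omega>|M. (\<psi> u k \<omega>)\<^sup>2)"
      have tp: "real t > 0" using t by simp
      have "noise_avg M w \<alpha> \<beta> 0 \<sigma> Q q x0 x1 t - S = (S + (T - real (Suc t) * S)) / real t"
        unfolding avg T_def[symmetric] using tp by (simp add: field_simps)
      moreover have "\<bar>S + (T - real (Suc t) * S)\<bar> \<le> \<bar>S\<bar> + D"
        using R[of t] unfolding T_def by (simp add: abs_triangle_ineq order.trans[OF abs_triangle_ineq])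
      ultimately show "norm (noise_avg M w \<alpha> \<beta> 0 \<sigma> Q q x0 x1 t - S) \<le> (\<bar>S\<bar> + D) / real t"
        using tp by (simp add: divide_right_mono)
    qed
  qed
  thus ?thesis unfolding S_def[symmetric] by (rule LIM_zero_cancel)
qed




lemma posdef_inj:
  fixes Q :: "real^'n^'n"
  assumes pd: "\<forall>x. x \<noteq> 0 \<longrightarrow> x \<bullet> (Q *v x) > 0"
  shows "inj ((*v) Q)"
proof (rule injI)
  fix x y assume "Q *v x = Q *v y"
  hence "Q *v (x - y) = 0" by (simp add: matrix_vector_mult_diff_distrib)
  hence "(x - y) \<bullet> (Q *v (x - y)) = 0" by simp
  thus "x = y" using pd by (metis less_irrefl right_minus_eq)
qed

lemma argmin_lemma:
  fixes Q :: "real^'n^'n"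
  assumes sym: "transpose Q = Q" and pd: "\<forall>x. x \<noteq> 0 \<longrightarrow> x \<bullet> (Q *v x) > 0"
  shows "\<exists>xs. Q *v xs = q \<and> quad_argmin Q q = xs"
proof -
  have "surj ((*v) Q)"
    using linear_injective_imp_surjective[OF matrix_vector_mul_linear posdef_inj[OF pd]] by simp
  then obtain xs where xs: "Q *v xs = q" by (metis surjD)
  have diff: "quad_fun Q q y - quad_fun Q q xs = (1/2) * ((y - xs) \<bullet> (Q *v (y - xs)))" for y
  proof -
    have s1: "xs \<bullet> (Q *v y) = y \<bullet> (Q *v xs)" using sym_dot[OF sym, of xs y] by (simp add: inner_commute)
    show ?thesis unfolding quad_fun_def xs[symmetric]
      by (simp add: matrix_vector_mult_diff_distrib inner_diff_left inner_diff_right s1 inner_commute algebra_simps)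
  qed
  have ge: "(y - xs) \<bullet> (Q *v (y - xs)) \<ge> 0" for y
    using pd by (cases "y - xs = 0") (auto intro: less_imp_le)
  have "quad_argmin Q q = xs" unfolding quad_argmin_def
  proof (rule the_equality)
    show "\<forall>y. quad_fun Q q xs \<le> quad_fun Q q y"
    proof
      fix y show "quad_fun Q q xs \<le> quad_fun Q q y" using diff[of y] ge[of y] by linarith
    qed
    fix x assume "\<forall>y. quad_fun Q q x \<le> quad_fun Q q y"
    hence "quad_fun Q q x \<le> quad_fun Q q xs" by blast
    hence "(x - xs) \<bullet> (Q *v (x - xs)) \<le> 0" using diff[of x] by simp
    thus "x = xs" using pd by (metis not_le right_minus_eq)
  qed
  thus ?thesis using xs by blast
qed

definition diagm :: "('n \<Rightarrow> real) \<Rightarrow> real^'n^'n" where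
  "diagm d = (\<chi> i j. if i = j then d i else 0)"

lemma diagm_mult: "diagm d *v v = (\<chi> i. d i * v $ i)"
proof -
  have "(\<Sum>j\<in>UNIV. (if i = j then d i else 0) * v $ j) = d i * v $ i" for i
  proof -
    have "(\<Sum>j\<in>UNIV. (if i = j then d i else 0) * v $ j) = (\<Sum>j\<in>UNIV. if i = j then d i * v $ j else 0)"
      by (rule sum.cong) auto
    also have "\<dots> = d i * v $ i" by simp
    finally show ?thesis .
  qed
  thus ?thesis unfolding diagm_def matrix_vector_mult_def by (simp add: vec_eq_iff)
qed

lemma diagm_eig: "mat_eigenvalue (diagm d) lam \<longleftrightarrow> (\<exists>i. d i = lam)"
proof
  assume "mat_eigenvalue (diagm d) lam"
  then obtain v where v: "v \<noteq> 0" "diagm d *v v = lam *\<^sub>R v" unfolding mat_eigenvalue_def by blast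
  obtain i where i: "v $ i \<noteq> 0" using v(1) by (metis vec_eq_iff zero_index)
  have "(diagm d *v v) $ i = (lam *\<^sub>R v) $ i" using v(2) by simp
  hence "d i * v $ i = lam * v $ i" by (simp add: diagm_mult)
  thus "\<exists>i. d i = lam" using i by auto
next
  assume "\<exists>i. d i = lam"
  then obtain i where i: "d i = lam" by blast
  have "diagm d *v axis i 1 = lam *\<^sub>R axis i 1"
    by (simp add: diagm_mult vec_eq_iff axis_def i)
  moreover have "axis i (1::real) \<noteq> 0" by (simp add: axis_eq_0_iff)
  ultimately show "mat_eigenvalue (diagm d) lam" unfolding mat_eigenvalue_def by blast
qed

lemma diagm_class:
  fixes d :: "'n::finite \<Rightarrow> real"
  assumes m0: "0 < m" and rng: "\<forall>i. m \<le> d i \<and> d i \<le> L" and im: "d i1 = m" and iL: "d i2 = L"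
  shows "(diagm d, q) \<in> quad_class m L"
proof -
  have T: "transpose (diagm d) = diagm d" unfolding diagm_def transpose_def by (simp add: vec_eq_iff)
  have P: "x \<bullet> (diagm d *v x) > 0" if x: "x \<noteq> 0" for x
  proof -
    obtain i where i: "x $ i \<noteq> 0" using x by (metis vec_eq_iff zero_index)
    have pos: "\<forall>j. 0 \<le> x $ j * (d j * x $ j)"
    proof
      fix j have "0 \<le> d j" using rng m0 by (meson less_le_trans less_imp_le)
      thus "0 \<le> x $ j * (d j * x $ j)"
        by (metis mult.left_commute mult_nonneg_nonneg zero_le_square)
    qed
    have "0 < x $ i * (d i * x $ i)"
    proof -
      have "0 < d i" using rng m0 by (meson less_le_trans)
      moreover have "0 < x $ i * x $ i" using i by (metis not_real_square_gt_zero)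
      ultimately show ?thesis by (simp add: mult.left_commute)
    qed
    hence "0 < (\<Sum>j\<in>UNIV. x $ j * (d j * x $ j))"
      using pos by (intro sum_pos2[where i=i]) auto
    thus ?thesis by (simp add: inner_vec_def diagm_mult)
  qed
  show ?thesis unfolding quad_class_def using T P rng im iL
    by (auto simp: diagm_eig)
qed




lemma param_facts:
  fixes m L \<kappa> \<rho> c \<alpha> \<beta> :: real
  assumes mL: "0 < m" "m \<le> L" and kap: "\<kappa> = L / m"
    and rho: "0 < \<rho>" "\<rho> < 1"
    and c_def: "c = (\<kappa> - (1 + \<rho>) / (1 - \<rho>)) / (\<rho> * (\<kappa> + (1 + \<rho>) / (1 - \<rho>)))"
    and al: "\<alpha> = (1 + \<rho>) * (1 + c * \<rho>) / L" and be: "\<beta> = c * \<rho>\<^sup>2"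
  shows "0 < \<alpha>" "-1 < \<beta>" "\<beta> < 1" "\<alpha> * (m + L) = 2 * (1 + \<beta>)"
    "2 * (1 + \<beta>) * \<kappa> = (\<kappa> + 1) * (1 + \<rho>) * (1 + c * \<rho>)"
    "\<alpha> * L = (1 + \<rho>) * (1 + c * \<rho>)" "\<alpha> * m * \<kappa> = (1 + \<rho>) * (1 + c * \<rho>)" "\<kappa> > 0"
proof -
  define r where "r = (1 + \<rho>) / (1 - \<rho>)"
  define s where "s = c * \<rho>"
  have r0: "r > 0" unfolding r_def using rho by simp
  have rr: "r * (1 - \<rho>) = 1 + \<rho>" unfolding r_def using rho by simp
  have L0: "L > 0" using mL by simp
  have k0: "\<kappa> > 0" unfolding kap using mL by simp
  thus "\<kappa> > 0" .
  have km: "\<kappa> * m = L" unfolding kap using mL by simp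
  have kr: "\<kappa> + r > 0" using k0 r0 by simp
  have ss: "s * (\<kappa> + r) = \<kappa> - r" unfolding s_def c_def r_def[symmetric] using rho kr by simp
  have s1: "s < 1" "-1 < s"
  proof -
    have "s * (\<kappa> + r) < 1 * (\<kappa> + r)" using ss r0 by simp
    thus "s < 1" using kr by (simp add: mult_less_cancel_right)
    have "(-1) * (\<kappa> + r) < s * (\<kappa> + r)" using ss k0 by simp
    thus "-1 < s" using mult_less_cancel_right_pos[OF kr] by blast
  qed
  have bs: "\<beta> = s * \<rho>" unfolding be s_def by (simp add: power2_eq_square)
  have "\<bar>\<beta>\<bar> < 1"
  proof -
    have "\<bar>\<beta>\<bar> = \<bar>s\<bar> * \<rho>" unfolding bs using rho by (simp add: abs_mult)
    also have "\<dots> < 1 * 1" using s1 rho by (intro mult_strict_mono) auto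
    finally show ?thesis by simp
  qed
  thus "-1 < \<beta>" "\<beta> < 1" by auto
  have aL: "\<alpha> * L = (1 + \<rho>) * (1 + s)" unfolding al s_def using L0 by simp
  thus "\<alpha> * L = (1 + \<rho>) * (1 + c * \<rho>)" unfolding s_def .
  show "0 < \<alpha>" using aL L0 s1 rho by (smt (verit) mult_pos_pos zero_less_mult_iff)
  have am: "\<alpha> * m * \<kappa> = (1 + \<rho>) * (1 + s)" using aL km by (simp add: algebra_simps)
  thus "\<alpha> * m * \<kappa> = (1 + \<rho>) * (1 + c * \<rho>)" unfolding s_def .
  have s2: "(\<kappa> + r) * (1 + s) = 2 * \<kappa>" using ss by (simp add: algebra_simps)
  have key: "2 * (1 + \<beta>) * \<kappa> = (\<kappa> + 1) * (1 + \<rho>) * (1 + s)"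
  proof -
    have "(2 * (1 + \<beta>) * \<kappa>) * (\<kappa> + r) = 2 * \<kappa> * (\<kappa> + r + \<rho> * (s * (\<kappa> + r)))"
      unfolding bs by (simp add: algebra_simps)
    also have "\<dots> = 2 * \<kappa> * (\<kappa> + \<rho> * \<kappa> + r * (1 - \<rho>))" unfolding ss by (simp add: algebra_simps)
    also have "\<dots> = 2 * \<kappa> * ((1 + \<rho>) * (1 + \<kappa>))" unfolding rr by (simp add: algebra_simps)
    also have "\<dots> = (\<kappa> + 1) * (1 + \<rho>) * ((\<kappa> + r) * (1 + s))"
      unfolding s2 by (simp add: algebra_simps)
    also have "\<dots> = ((\<kappa> + 1) * (1 + \<rho>) * (1 + s)) * (\<kappa> + r)"
      by (simp add: algebra_simps)
    finally show ?thesis using kr by simp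
  qed
  thus "2 * (1 + \<beta>) * \<kappa> = (\<kappa> + 1) * (1 + \<rho>) * (1 + c * \<rho>)" unfolding s_def .
  have "\<alpha> * (m + L) * \<kappa> = 2 * (1 + \<beta>) * \<kappa>"
  proof -
    have "\<alpha> * (m + L) * \<kappa> = \<alpha> * m * \<kappa> + \<alpha> * L * \<kappa>" by (simp add: algebra_simps)
    also have "\<dots> = (1 + \<rho>) * (1 + s) * (1 + \<kappa>)" unfolding am aL by (simp add: algebra_simps)
    finally show ?thesis unfolding key by (simp add: algebra_simps)
  qed
  thus "\<alpha> * (m + L) = 2 * (1 + \<beta>)" using k0 by simp
qed

lemma Jhat_eq: "Jhat \<alpha> \<beta> 0 \<sigma> lam = \<sigma>\<^sup>2 * (1 + \<beta>) / ((1 - \<beta>) * (\<alpha> * lam * (2 * (1 + \<beta>) - \<alpha> * lam)))"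
proof -
  have d: "\<beta> - 0 * \<alpha> * lam + ((1 + 0) * \<alpha> * lam - (1 + \<beta>)) + 1 = \<alpha> * lam" by simp
  have l: "\<beta> - 0 * \<alpha> * lam - ((1 + 0) * \<alpha> * lam - (1 + \<beta>)) + 1 = 2 * (1 + \<beta>) - \<alpha> * lam" by simp
  have h: "1 - (\<beta> - 0 * \<alpha> * lam) = 1 - \<beta>" by simp
  have s: "\<alpha> * lam + (2 * (1 + \<beta>) - \<alpha> * lam) = 2 * (1 + \<beta>)" by simp
  have "Jhat \<alpha> \<beta> 0 \<sigma> lam = \<sigma>\<^sup>2 * (2 * (1 + \<beta>)) / (2 * \<alpha> * lam * (1 - \<beta>) * (2 * (1 + \<beta>) - \<alpha> * lam))"
    unfolding Jhat_def Let_def d l h s by (simp add: mult.assoc)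
  also have "\<dots> = (2 * (\<sigma>\<^sup>2 * (1 + \<beta>))) / (2 * ((1 - \<beta>) * (\<alpha> * lam * (2 * (1 + \<beta>) - \<alpha> * lam))))"
    by (simp only: mult_ac)
  also have "\<dots> = \<sigma>\<^sup>2 * (1 + \<beta>) / ((1 - \<beta>) * (\<alpha> * lam * (2 * (1 + \<beta>) - \<alpha> * lam)))"
    by (rule mult_divide_mult_cancel_left) simp
  finally show ?thesis .
qed

lemma Jhat_Cf: "Jhat \<alpha> \<beta> 0 \<sigma> lam = \<sigma>\<^sup>2 * Cf (1 + \<beta> - \<alpha> * lam) (- \<beta>)"
proof -
  have e: "1 - - \<beta> - (1 + \<beta> - \<alpha> * lam) = \<alpha> * lam" "1 - - \<beta> + (1 + \<beta> - \<alpha> * lam) = 2 * (1 + \<beta>) - \<alpha> * lam"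
    "1 + - \<beta> = 1 - \<beta>" "1 - - \<beta> = 1 + \<beta>" by simp_all
  show ?thesis unfolding Jhat_eq Cf_def e by (simp add: ac_simps)
qed

lemma Jhat_bounds:
  assumes a0: "0 < \<alpha>" and b: "-1 < \<beta>" "\<beta> < 1" and sum: "\<alpha> * (m + L) = 2 * (1 + \<beta>)"
    and m0: "0 < m" and lam: "m \<le> lam" "lam \<le> L"
  shows "Jhat \<alpha> \<beta> 0 \<sigma> lam \<le> Jhat \<alpha> \<beta> 0 \<sigma> m" "Jhat \<alpha> \<beta> 0 \<sigma> ((m + L) / 2) \<le> Jhat \<alpha> \<beta> 0 \<sigma> lam"
proof -
  define N where "N = \<sigma>\<^sup>2 * (1 + \<beta>) / (1 - \<beta>)"
  have N0: "N \<ge> 0" unfolding N_def using b by simp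
  define M where "M = 1 + \<beta>"
  define f where "f = (\<lambda>x. x * (2 * M - x))"
  have J: "Jhat \<alpha> \<beta> 0 \<sigma> x = N / f (\<alpha> * x)" for x
    unfolding Jhat_eq N_def f_def M_def by simp
  have aL: "\<alpha> * L = 2 * M - \<alpha> * m" using sum unfolding M_def by (simp add: algebra_simps)
  have am0: "\<alpha> * m > 0" using a0 m0 by simp
  have aL0: "\<alpha> * L > 0" using am0 a0 lam by (smt (verit) mult_left_mono)
  have x1: "\<alpha> * m \<le> \<alpha> * lam" "\<alpha> * lam \<le> \<alpha> * L" using lam a0 by auto
  have fm: "f (\<alpha> * m) > 0" unfolding f_def using am0 aL0 aL by simp
  have f1: "f (\<alpha> * m) \<le> f (\<alpha> * lam)"
  proof -
    have "f (\<alpha> * lam) - f (\<alpha> * m) = (\<alpha> * lam - \<alpha> * m) * (\<alpha> * L - \<alpha> * lam)"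
      unfolding f_def aL by (simp add: algebra_simps)
    also have "\<dots> \<ge> 0" using x1 by simp
    finally show ?thesis by simp
  qed
  have f2: "f (\<alpha> * lam) \<le> f (\<alpha> * ((m + L) / 2))"
  proof -
    have mid: "\<alpha> * ((m + L) / 2) = M" using sum unfolding M_def by (simp add: algebra_simps)
    have "f M - f (\<alpha> * lam) = (\<alpha> * lam - M)\<^sup>2" unfolding f_def by (simp add: algebra_simps power2_eq_square)
    moreover have "0 \<le> (\<alpha> * lam - M)\<^sup>2" by simp
    ultimately show ?thesis unfolding mid by linarith
  qed
  show "Jhat \<alpha> \<beta> 0 \<sigma> lam \<le> Jhat \<alpha> \<beta> 0 \<sigma> m" unfolding J using N0 fm f1
    by (intro divide_left_mono) auto
  show "Jhat \<alpha> \<beta> 0 \<sigma> ((m + L) / 2) \<le> Jhat \<alpha> \<beta> 0 \<sigma> lam" unfolding J using N0 fm f1 f2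
    by (intro divide_left_mono) auto
qed

lemma Jhat_mL:
  assumes sum: "\<alpha> * (m + L) = 2 * (1 + \<beta>)"
  shows "Jhat \<alpha> \<beta> 0 \<sigma> L = Jhat \<alpha> \<beta> 0 \<sigma> m"
proof -
  have "2 * (1 + \<beta>) - \<alpha> * L = \<alpha> * m" "2 * (1 + \<beta>) - \<alpha> * m = \<alpha> * L"
    using sum by (simp_all add: algebra_simps)
  thus ?thesis unfolding Jhat_eq by (simp add: algebra_simps)
qed

lemma stab_lam:
  assumes a0: "0 < \<alpha>" and b: "-1 < \<beta>" "\<beta> < 1" and sum: "\<alpha> * (m + L) = 2 * (1 + \<beta>)"
    and m0: "0 < m" and lam: "m \<le> lam" "lam \<le> L"
  shows "stab (1 + \<beta> - \<alpha> * lam) (- \<beta>)"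
proof
  show "0 < 1 + - \<beta>" using b by simp
  have "\<alpha> * m \<le> \<alpha> * lam" "\<alpha> * lam \<le> \<alpha> * L" using lam a0 by auto
  moreover have "\<alpha> * m > 0" using a0 m0 by simp
  ultimately show "0 < 1 - - \<beta> - (1 + \<beta> - \<alpha> * lam)" "0 < 1 - - \<beta> + (1 + \<beta> - \<alpha> * lam)"
    using sum by (simp_all add: algebra_simps)
qed




lemma eig_in_B:
  fixes Q :: "real^'n^'n"
  assumes sym: "transpose Q = Q" and eig: "\<forall>u\<in>B. Q *v u = lam u *\<^sub>R u" and sp: "span B = UNIV"
    and ev: "mat_eigenvalue Q \<mu>"
  shows "\<exists>u\<in>B. lam u = \<mu>"
proof (rule ccontr)
  assume ne: "\<not> (\<exists>u\<in>B. lam u = \<mu>)"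
  obtain v where v: "v \<noteq> 0" "Q *v v = \<mu> *\<^sub>R v" using ev unfolding mat_eigenvalue_def by blast
  have "orthogonal v u" if u: "u \<in> B" for u
  proof -
    have "u \<bullet> (Q *v v) = (Q *v u) \<bullet> v" by (rule sym_dot[OF sym])
    hence "\<mu> * (u \<bullet> v) = lam u * (u \<bullet> v)" using v(2) eig u by simp
    hence "u \<bullet> v = 0" using ne u by auto
    thus ?thesis unfolding orthogonal_def by (simp add: inner_commute)
  qed
  hence "orthogonal v v" using orthogonal_to_span[of v B v] sp by auto
  thus False using v(1) unfolding orthogonal_def by simp
qed

lemma gen_J:
  fixes Q :: "real^'n^'n" and w :: "nat \<Rightarrow> 'a \<Rightarrow> real^'n"
  assumes cls: "(Q, q) \<in> quad_class m L" and fin: "finite B" and orth: "pairwise orthogonal B"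
    and eig: "\<forall>u\<in>B. norm u = 1 \<and> Q *v u = lam u *\<^sub>R u" and sp: "span B = UNIV"
    and a0: "0 < \<alpha>" and b: "-1 < \<beta>" "\<beta> < 1" and sum: "\<alpha> * (m + L) = 2 * (1 + \<beta>)"
    and m0: "0 < m" and W: "white_noise M w"
  shows "noise_avg M w \<alpha> \<beta> 0 \<sigma> Q q x0 x1 \<longlonglongrightarrow> (\<Sum>u\<in>B. Jhat \<alpha> \<beta> 0 \<sigma> (lam u))"
    "\<forall>u\<in>B. m \<le> lam u \<and> lam u \<le> L"
proof -
  have sym: "transpose Q = Q" and pd: "\<forall>x. x \<noteq> 0 \<longrightarrow> x \<bullet> (Q *v x) > 0"
    and up: "\<forall>lam. mat_eigenvalue Q lam \<longrightarrow> lam \<le> L" and lo: "\<forall>lam. mat_eigenvalue Q lam \<longrightarrow> m \<le> lam"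
    using cls unfolding quad_class_def by auto
  obtain xs where xs: "Q *v xs = q" "quad_argmin Q q = xs" using argmin_lemma[OF sym pd] by blast
  have rng: "\<forall>u\<in>B. m \<le> lam u \<and> lam u \<le> L"
  proof
    fix u assume u: "u \<in> B"
    have "u \<noteq> 0" using eig u by auto
    hence "mat_eigenvalue Q (lam u)" using eig u unfolding mat_eigenvalue_def by blast
    thus "m \<le> lam u \<and> lam u \<le> L" using up lo by blast
  qed
  thus "\<forall>u\<in>B. m \<le> lam u \<and> lam u \<le> L" .
  have st: "\<forall>u\<in>B. stab (1 + \<beta> - \<alpha> * lam u) (- \<beta>)"
    using rng stab_lam[OF a0 b sum m0] by blast
  show "noise_avg M w \<alpha> \<beta> 0 \<sigma> Q q x0 x1 \<longlonglongrightarrow> (\<Sum>u\<in>B. Jhat \<alpha> \<beta> 0 \<sigma> (lam u))"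
    unfolding Jhat_Cf by (rule vec_main[OF sym xs fin orth eig sp st W])
qed

lemma class_J:
  fixes Q :: "real^'n^'n" and w :: "nat \<Rightarrow> 'a \<Rightarrow> real^'n"
  assumes cls: "(Q, q) \<in> quad_class m L"
    and a0: "0 < \<alpha>" and b: "-1 < \<beta>" "\<beta> < 1" and sum: "\<alpha> * (m + L) = 2 * (1 + \<beta>)"
    and m0: "0 < m" and W: "white_noise M w"
  shows "\<exists>(B::(real^'n) set) lam. finite B \<and> card B = CARD('n) \<and> (\<forall>u\<in>B. m \<le> lam u \<and> lam u \<le> L)
     \<and> (\<exists>u\<in>B. lam u = m) \<and> (\<exists>u\<in>B. lam u = L)
     \<and> noise_avg M w \<alpha> \<beta> 0 \<sigma> Q q x0 x1 \<longlonglongrightarrow> (\<Sum>u\<in>B. Jhat \<alpha> \<beta> 0 \<sigma> (lam u))"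
proof -
  have sym: "transpose Q = Q" and em: "mat_eigenvalue Q m" and eL: "mat_eigenvalue Q L"
    using cls unfolding quad_class_def by auto
  obtain B where B: "finite B" "pairwise orthogonal B"
     "\<forall>u\<in>B. norm u = 1 \<and> Q *v u = (u \<bullet> (Q *v u)) *\<^sub>R u" "span B = UNIV" "card B = CARD('n)"
    using spectral[OF sym] by blast
  define lam where "lam = (\<lambda>u. u \<bullet> (Q *v u))"
  have eig: "\<forall>u\<in>B. norm u = 1 \<and> Q *v u = lam u *\<^sub>R u" using B(3) unfolding lam_def by blast
  have eig': "\<forall>u\<in>B. Q *v u = lam u *\<^sub>R u" using eig by blast
  note G = gen_J[OF cls B(1,2) eig B(4) a0 b sum m0 W]
  have e1: "\<exists>u\<in>B. lam u = m" by (rule eig_in_B[OF sym eig' B(4) em])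
  have e2: "\<exists>u\<in>B. lam u = L" by (rule eig_in_B[OF sym eig' B(4) eL])
  have cv: "noise_avg M w \<alpha> \<beta> 0 \<sigma> Q q x0 x1 \<longlonglongrightarrow> (\<Sum>u\<in>B. Jhat \<alpha> \<beta> 0 \<sigma> (lam u))"
    by (rule G(1))
  have rg: "\<forall>u\<in>B. m \<le> lam u \<and> lam u \<le> L" by (rule G(2))
  show ?thesis
    apply (rule exI[where x=B])
    apply (rule exI[where x=lam])
    using B(1) B(5) rg e1 e2 cv by simp
qed

lemma diag_J:
  fixes d :: "'n::finite \<Rightarrow> real" and w :: "nat \<Rightarrow> 'a \<Rightarrow> real^'n"
  assumes rng: "\<forall>i. m \<le> d i \<and> d i \<le> L" and im: "d i1 = m" and iL: "d i2 = L"
    and a0: "0 < \<alpha>" and b: "-1 < \<beta>" "\<beta> < 1" and sum: "\<alpha> * (m + L) = 2 * (1 + \<beta>)"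
    and m0: "0 < m" and W: "white_noise M w"
  shows "noise_avg M w \<alpha> \<beta> 0 \<sigma> (diagm d) q x0 x1 \<longlonglongrightarrow> (\<Sum>i\<in>UNIV. Jhat \<alpha> \<beta> 0 \<sigma> (d i))"
proof -
  have cls: "(diagm d, q) \<in> quad_class m L" by (rule diagm_class[OF m0 rng im iL])
  define B where "B = range (\<lambda>i::'n. axis i (1::real))"
  define lam where "lam = (\<lambda>u. u \<bullet> (diagm d *v u))"
  have ax: "diagm d *v axis i 1 = d i *\<^sub>R axis i 1" for i
    by (simp add: diagm_mult vec_eq_iff axis_def)
  have lax: "lam (axis i 1) = d i" for i unfolding lam_def ax by (simp add: inner_axis_axis)
  have fin: "finite B" unfolding B_def by simp
  have orth: "pairwise orthogonal B" unfolding B_def pairwise_def orthogonal_def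
    by (auto simp: inner_axis_axis)
  have eig: "\<forall>u\<in>B. norm u = 1 \<and> diagm d *v u = lam u *\<^sub>R u" unfolding B_def
    by (auto simp: ax lax)
  have "B = Basis" unfolding B_def Basis_vec_def by auto
  hence sp: "span B = UNIV" by (simp add: span_Basis)
  have inj: "inj (\<lambda>i::'n. axis i (1::real))" by (rule injI) (simp add: axis_eq_axis)
  have "(\<Sum>u\<in>B. Jhat \<alpha> \<beta> 0 \<sigma> (lam u)) = (\<Sum>i\<in>UNIV. Jhat \<alpha> \<beta> 0 \<sigma> (d i))"
    unfolding B_def by (subst sum.reindex[OF inj]) (simp add: lax)
  thus ?thesis using gen_J(1)[OF cls fin orth eig sp a0 b sum m0 W, of \<sigma> x0 x1] by simp
qed




lemma two_distinct:
  assumes "finite A" "card A \<ge> 2" "a \<in> A"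
  shows "\<exists>b\<in>A. b \<noteq> a"
proof (rule ccontr)
  assume "\<not> (\<exists>b\<in>A. b \<noteq> a)"
  hence "A \<subseteq> {a}" by blast
  hence "card A \<le> 1" using card_mono[of "{a}" A] by simp
  thus False using assms by simp
qed

lemma sum_two_rest:
  fixes f :: "'b \<Rightarrow> real"
  assumes fin: "finite A" and a: "a \<in> A" and b: "b \<in> A" and ab: "a \<noteq> b"
  shows "sum f A = f a + f b + sum f (A - {a} - {b})"
proof -
  have "sum f A = f a + sum f (A - {a})" using sum.remove[OF fin a] .
  also have "sum f (A - {a}) = f b + sum f (A - {a} - {b})"
    using sum.remove[of "A - {a}" b f] fin b ab by simp
  finally show ?thesis by simp
qed

lemma card_two_rest:
  assumes fin: "finite A" and a: "a \<in> A" and b: "b \<in> A" and ab: "a \<noteq> b"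
  shows "real (card (A - {a} - {b})) = real (card A) - 2"
proof -
  have "card (A - {a} - {b}) = card A - 2" using fin a b ab by (simp add: card_Diff_singleton_if)
  moreover have "card A \<ge> 2"
  proof -
    have "{a, b} \<subseteq> A" using a b by simp
    hence "card {a, b} \<le> card A" using fin by (rule card_mono[rotated])
    thus ?thesis using ab by simp
  qed
  ultimately show ?thesis by (simp add: of_nat_diff)
qed


theorem corollary2:
  fixes M :: "'a measure" and w :: "nat \<Rightarrow> 'a \<Rightarrow> real^'n"
    and m L \<kappa> \<rho> c \<alpha> \<beta> \<gamma> \<sigma>\<^sub>w :: real
    and x0 x1 :: "real^'n"
  assumes n2: "CARD('n) \<ge> 2"
    and mL: "0 < m" "m \<le> L"
    and kap: "\<kappa> = L / m"
    and rho: "0 < \<rho>" "\<rho> < 1" "1 / (1 - \<rho>) \<ge> (sqrt \<kappa> + 1) / 2"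
    and c_def: "c = (\<kappa> - (1 + \<rho>) / (1 - \<rho>)) / (\<rho> * (\<kappa> + (1 + \<rho>) / (1 - \<rho>)))"
    and params: "\<alpha> = (1 + \<rho>) * (1 + c * \<rho>) / L" "\<beta> = c * \<rho>\<^sup>2" "\<gamma> = 0"
    and sig: "\<sigma>\<^sub>w \<ge> 0"
    and noise: "white_noise M w"
  shows
    "(\<forall>(Q, q) \<in> quad_class m L.
        convergent (noise_avg M w \<alpha> \<beta> \<gamma> \<sigma>\<^sub>w Q q x0 x1))
   \<and> (let Js = (\<lambda>(Q, q). noise_amp M w \<alpha> \<beta> \<gamma> \<sigma>\<^sub>w Q q x0 x1) ` (quad_class m L :: ((real^'n^'n) \<times> (real^'n)) set);
          n = real CARD('n); lamh = (m + L) / 2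
      in
        real CARD('n) * Jhat \<alpha> \<beta> \<gamma> \<sigma>\<^sub>w m \<in> Js \<and> (\<forall>v \<in> Js. v \<le> n * Jhat \<alpha> \<beta> \<gamma> \<sigma>\<^sub>w m)
      \<and> n * Jhat \<alpha> \<beta> \<gamma> \<sigma>\<^sub>w m = n * Jhat \<alpha> \<beta> \<gamma> \<sigma>\<^sub>w L
      \<and> 2 * Jhat \<alpha> \<beta> \<gamma> \<sigma>\<^sub>w m + (n - 2) * Jhat \<alpha> \<beta> \<gamma> \<sigma>\<^sub>w lamh \<in> Js
      \<and> (\<forall>v \<in> Js. 2 * Jhat \<alpha> \<beta> \<gamma> \<sigma>\<^sub>w m + (n - 2) * Jhat \<alpha> \<beta> \<gamma> \<sigma>\<^sub>w lamh \<le> v)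
      \<and> Jhat \<alpha> \<beta> \<gamma> \<sigma>\<^sub>w m = \<sigma>\<^sub>w\<^sup>2 * (\<kappa> + 1) / (2 * (1 - c * \<rho>\<^sup>2) * (1 + \<rho>) * (1 + c * \<rho>))
      \<and> Jhat \<alpha> \<beta> \<gamma> \<sigma>\<^sub>w lamh = \<sigma>\<^sub>w\<^sup>2 / ((1 + c * \<rho>\<^sup>2) * (1 - c * \<rho>\<^sup>2)))"
proof -
  note PF = param_facts[OF mL kap rho(1,2) c_def params(1,2)]
  have a0: "0 < \<alpha>" and bm: "-1 < \<beta>" and bp: "\<beta> < 1" and sum: "\<alpha> * (m + L) = 2 * (1 + \<beta>)"
    and key: "2 * (1 + \<beta>) * \<kappa> = (\<kappa> + 1) * (1 + \<rho>) * (1 + c * \<rho>)"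
    and aL: "\<alpha> * L = (1 + \<rho>) * (1 + c * \<rho>)" and amk: "\<alpha> * m * \<kappa> = (1 + \<rho>) * (1 + c * \<rho>)"
    and k0: "\<kappa> > 0" using PF by auto
  have m0: "0 < m" using mL by simp
  have g0: "\<gamma> = 0" using params by simp
  define J where "J = Jhat \<alpha> \<beta> 0 \<sigma>\<^sub>w"
  define lamh where "lamh = (m + L) / 2"
  define n where "n = real CARD('n)"
  define Js where "Js = (\<lambda>(Q, q). noise_amp M w \<alpha> \<beta> 0 \<sigma>\<^sub>w Q q x0 x1) ` (quad_class m L :: ((real^'n^'n) \<times> (real^'n)) set)"
  have JL: "J L = J m" unfolding J_def by (rule Jhat_mL[OF sum])
  have Jb: "J lam \<le> J m" "J lamh \<le> J lam" if "m \<le> lam" "lam \<le> L" for lam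
    unfolding J_def lamh_def using Jhat_bounds[OF a0 bm bp sum m0 that] by auto
  have lh: "m \<le> lamh" "lamh \<le> L" unfolding lamh_def using mL by auto
  have CJ: "\<exists>(B::(real^'n) set) lam. finite B \<and> card B = CARD('n) \<and> (\<forall>u\<in>B. m \<le> lam u \<and> lam u \<le> L)
     \<and> (\<exists>u\<in>B. lam u = m) \<and> (\<exists>u\<in>B. lam u = L)
     \<and> noise_avg M w \<alpha> \<beta> 0 \<sigma>\<^sub>w Q q x0 x1 \<longlonglongrightarrow> (\<Sum>u\<in>B. J (lam u))"
    if "(Q, q) \<in> quad_class m L" for Q q
    unfolding J_def by (rule class_J[OF that a0 bm bp sum m0 noise])
  have conv: "\<forall>(Q, q) \<in> quad_class m L. convergent (noise_avg M w \<alpha> \<beta> 0 \<sigma>\<^sub>w Q q x0 x1)"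
  proof (clarify)
    fix Q q assume "(Q, q) \<in> (quad_class m L :: ((real^'n^'n) \<times> (real^'n)) set)"
    from CJ[OF this] show "convergent (noise_avg M w \<alpha> \<beta> 0 \<sigma>\<^sub>w Q q x0 x1)"
      by (auto intro: convergentI)
  qed
  have Jsv: "\<exists>(B::(real^'n) set) lam. finite B \<and> card B = CARD('n) \<and> (\<forall>u\<in>B. m \<le> lam u \<and> lam u \<le> L)
     \<and> (\<exists>u\<in>B. lam u = m) \<and> (\<exists>u\<in>B. lam u = L) \<and> v = (\<Sum>u\<in>B. J (lam u))" if vJ: "v \<in> Js" for v
  proof -
    obtain Q q where Qq: "(Q, q) \<in> (quad_class m L :: ((real^'n^'n) \<times> (real^'n)) set)"
      and v: "v = noise_amp M w \<alpha> \<beta> 0 \<sigma>\<^sub>w Q q x0 x1"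
    proof -
      obtain x where x: "x \<in> (quad_class m L :: ((real^'n^'n) \<times> (real^'n)) set)"
        "v = (\<lambda>(Q, q). noise_amp M w \<alpha> \<beta> 0 \<sigma>\<^sub>w Q q x0 x1) x"
        using vJ unfolding Js_def by blast
      obtain Q q where "x = (Q, q)" by (cases x) blast
      thus ?thesis using x that by simp
    qed
    obtain B :: "(real^'n) set" and lam where B: "finite B" "card B = CARD('n)" "\<forall>u\<in>B. m \<le> lam u \<and> lam u \<le> L"
      "\<exists>u\<in>B. lam u = m" "\<exists>u\<in>B. lam u = L"
      and lim: "noise_avg M w \<alpha> \<beta> 0 \<sigma>\<^sub>w Q q x0 x1 \<longlonglongrightarrow> (\<Sum>u\<in>B. J (lam u))"
      using CJ[OF Qq] by blast
    have "v = (\<Sum>u\<in>B. J (lam u))" unfolding v noise_amp_def using lim by (rule limI)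
    thus ?thesis using B by blast
  qed
  obtain i0 :: 'n where True by blast
  obtain i1 :: 'n where i01: "i1 \<noteq> i0" using two_distinct[of "UNIV :: 'n set" i0] n2 by auto
  have maxin: "n * J m \<in> Js"
  proof -
    define d where "d = (\<lambda>i. if i = i0 then m else L)"
    have rng: "\<forall>i. m \<le> d i \<and> d i \<le> L" unfolding d_def using mL by auto
    have dm: "d i0 = m" and dL: "d i1 = L" unfolding d_def using i01 by auto
    have cls: "(diagm d, 0) \<in> (quad_class m L :: ((real^'n^'n) \<times> (real^'n)) set)"
      by (rule diagm_class[OF m0 rng dm dL])
    have lim: "noise_avg M w \<alpha> \<beta> 0 \<sigma>\<^sub>w (diagm d) 0 x0 x1 \<longlonglongrightarrow> (\<Sum>i\<in>UNIV. J (d i))"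
      unfolding J_def by (rule diag_J[OF rng dm dL a0 bm bp sum m0 noise])
    have "(\<Sum>i\<in>UNIV. J (d i)) = (\<Sum>i\<in>(UNIV::'n set). J m)"
      by (rule sum.cong) (auto simp: d_def JL)
    also have "\<dots> = n * J m" unfolding n_def by simp
    finally have "noise_amp M w \<alpha> \<beta> 0 \<sigma>\<^sub>w (diagm d) 0 x0 x1 = n * J m"
      unfolding noise_amp_def using lim by (simp add: limI)
    thus ?thesis unfolding Js_def using cls by (force intro: rev_image_eqI)
  qed
  have minin: "2 * J m + (n - 2) * J lamh \<in> Js"
  proof -
    define d where "d = (\<lambda>i. if i = i0 then m else if i = i1 then L else lamh)"
    have rng: "\<forall>i. m \<le> d i \<and> d i \<le> L" unfolding d_def using mL lh by auto
    have dm: "d i0 = m" and dL: "d i1 = L" unfolding d_def using i01 by auto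
    have cls: "(diagm d, 0) \<in> (quad_class m L :: ((real^'n^'n) \<times> (real^'n)) set)"
      by (rule diagm_class[OF m0 rng dm dL])
    have lim: "noise_avg M w \<alpha> \<beta> 0 \<sigma>\<^sub>w (diagm d) 0 x0 x1 \<longlonglongrightarrow> (\<Sum>i\<in>UNIV. J (d i))"
      unfolding J_def by (rule diag_J[OF rng dm dL a0 bm bp sum m0 noise])
    have "(\<Sum>i\<in>UNIV. J (d i)) = J (d i0) + J (d i1) + (\<Sum>i\<in>UNIV - {i0} - {i1}. J (d i))"
      by (rule sum_two_rest) (use i01 in auto)
    also have "(\<Sum>i\<in>UNIV - {i0} - {i1}. J (d i)) = (\<Sum>i\<in>UNIV - {i0} - {i1}. J lamh)"
      by (rule sum.cong) (auto simp: d_def)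
    also have "\<dots> = (n - 2) * J lamh"
      using card_two_rest[of "UNIV :: 'n set" i0 i1] i01 unfolding n_def by simp
    finally have "noise_amp M w \<alpha> \<beta> 0 \<sigma>\<^sub>w (diagm d) 0 x0 x1 = 2 * J m + (n - 2) * J lamh"
      unfolding noise_amp_def using lim dm dL JL by (simp add: limI)
    thus ?thesis unfolding Js_def using cls by (force intro: rev_image_eqI)
  qed
  have upper: "\<forall>v\<in>Js. v \<le> n * J m"
  proof
    fix v assume vJs: "v \<in> Js"
    from Jsv[OF vJs] obtain B :: "(real^'n) set" and lam where B: "finite B" "card B = CARD('n)" "\<forall>u\<in>B. m \<le> lam u \<and> lam u \<le> L"
      and v: "v = (\<Sum>u\<in>B. J (lam u))" by (elim exE conjE) (rule that; assumption)
    have "v \<le> (\<Sum>u\<in>B. J m)" unfolding v using B(3) Jb by (intro sum_mono) auto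
    also have "\<dots> = n * J m" using B(2) unfolding n_def by simp
    finally show "v \<le> n * J m" .
  qed
  have lower: "\<forall>v\<in>Js. 2 * J m + (n - 2) * J lamh \<le> v"
  proof
    fix v assume vJs: "v \<in> Js"
    from Jsv[OF vJs] obtain B :: "(real^'n) set" and lam where B: "finite B" "card B = CARD('n)" "\<forall>u\<in>B. m \<le> lam u \<and> lam u \<le> L"
      "\<exists>u\<in>B. lam u = m" "\<exists>u\<in>B. lam u = L"
      and v: "v = (\<Sum>u\<in>B. J (lam u))" by (elim exE conjE) (rule that; assumption)
    obtain u1 u2 where u: "u1 \<in> B" "u2 \<in> B" "u1 \<noteq> u2" "J (lam u1) = J m" "J (lam u2) = J m"
    proof (cases "m = L")
      case True
      obtain u1 where u1: "u1 \<in> B" using B(4) by blast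
      obtain u2 where u2: "u2 \<in> B" "u2 \<noteq> u1" using two_distinct[OF B(1) _ u1] B(2) n2 by auto
      have "lam u1 = m" "lam u2 = m" using B(3) u1 u2 True by (auto intro: antisym)
      thus ?thesis using that u1 u2 by metis
    next
      case False
      obtain u1 where u1: "u1 \<in> B" "lam u1 = m" using B(4) by blast
      obtain u2 where u2: "u2 \<in> B" "lam u2 = L" using B(5) by blast
      have "u1 \<noteq> u2" using u1 u2 False by auto
      thus ?thesis using that u1 u2 JL by metis
    qed
    have "v = J (lam u1) + J (lam u2) + (\<Sum>x\<in>B - {u1} - {u2}. J (lam x))"
      unfolding v by (rule sum_two_rest[OF B(1) u(1,2,3)])
    moreover have "(\<Sum>x\<in>B - {u1} - {u2}. J lamh) \<le> (\<Sum>x\<in>B - {u1} - {u2}. J (lam x))"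
      using B(3) Jb by (intro sum_mono) auto
    moreover have "(\<Sum>x\<in>B - {u1} - {u2}. J lamh) = (n - 2) * J lamh"
      using card_two_rest[OF B(1) u(1,2,3)] B(2) unfolding n_def by simp
    ultimately show "2 * J m + (n - 2) * J lamh \<le> v" using u(4,5) by linarith
  qed
  have cf1: "J m = \<sigma>\<^sub>w\<^sup>2 * (\<kappa> + 1) / (2 * (1 - c * \<rho>\<^sup>2) * (1 + \<rho>) * (1 + c * \<rho>))"
  proof -
    define P where "P = (1 + \<rho>) * (1 + c * \<rho>)"
    have L0: "L > 0" using mL by simp
    have P0: "P > 0" unfolding P_def aL[symmetric] using a0 L0 by simp
    have am: "\<alpha> * m = P / \<kappa>" using amk k0 unfolding P_def by (simp add: field_simps)
    have aL': "2 * (1 + \<beta>) - \<alpha> * m = P" using sum aL unfolding P_def by (simp add: algebra_simps)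
    have kp: "\<kappa> + 1 = 2 * (1 + \<beta>) * \<kappa> / P" using key P0 unfolding P_def by (simp add: field_simps)
    have b1: "1 - \<beta> \<noteq> 0" using bp by simp
    have "J m = \<sigma>\<^sub>w\<^sup>2 * (1 + \<beta>) / ((1 - \<beta>) * (P / \<kappa> * P))"
      unfolding J_def Jhat_eq am[symmetric] aL' by simp
    also have "\<dots> = \<sigma>\<^sub>w\<^sup>2 * (2 * (1 + \<beta>) * \<kappa> / P) / (2 * (1 - \<beta>) * P)"
      using P0 k0 b1 by (simp add: field_simps)
    also have "\<dots> = \<sigma>\<^sub>w\<^sup>2 * (\<kappa> + 1) / (2 * (1 - \<beta>) * P)"
      unfolding kp[symmetric] by (rule refl)
    also have "\<dots> = \<sigma>\<^sub>w\<^sup>2 * (\<kappa> + 1) / (2 * (1 - c * \<rho>\<^sup>2) * (1 + \<rho>) * (1 + c * \<rho>))"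
      unfolding P_def params(2) by (simp only: mult.assoc)
    finally show ?thesis .
  qed
  have cf2: "J lamh = \<sigma>\<^sub>w\<^sup>2 / ((1 + c * \<rho>\<^sup>2) * (1 - c * \<rho>\<^sup>2))"
  proof -
    have mid: "\<alpha> * lamh = 1 + \<beta>" using sum unfolding lamh_def by (simp add: algebra_simps)
    have b1: "1 + \<beta> \<noteq> 0" using bm by simp
    have "J lamh = \<sigma>\<^sub>w\<^sup>2 * (1 + \<beta>) / ((1 - \<beta>) * ((1 + \<beta>) * (2 * (1 + \<beta>) - (1 + \<beta>))))"
      unfolding J_def Jhat_eq mid by simp
    also have "\<dots> = ((1 + \<beta>) * \<sigma>\<^sub>w\<^sup>2) / ((1 + \<beta>) * ((1 + \<beta>) * (1 - \<beta>)))"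
      by (simp add: mult_ac)
    also have "\<dots> = \<sigma>\<^sub>w\<^sup>2 / ((1 + \<beta>) * (1 - \<beta>))"
      by (rule mult_divide_mult_cancel_left[OF b1])
    finally show ?thesis unfolding params(2) .
  qed
  show ?thesis
    unfolding Let_def g0 J_def[symmetric] lamh_def[symmetric] n_def[symmetric] Js_def[symmetric]
    using conv maxin upper JL minin lower cf1 cf2 by simp
qed


end
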